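(* Let $\mathbb{K}\in\{\mathbb{R},\mathbb{C}\}$, $d,m,n\ge1$ with $(m,n)\ne(1,1)$, and let $(\mathcal{X}^d,\pi^\Delta)$ be a non-degenerate simplicial resolution of the projection $\pi^{d,m}_{n,\mathbb{K}}:Z^{d,m}_{n,\mathbb{K}}\to\Sigma^{d,m}_{n,\mathbb{K}}$, with filtration $\mathcal{X}^d_0\subset\mathcal{X}^d_1\subset\cdots$. Then for each $1\le k\le\lfloor d/n\rfloor$, the space $\mathcal{X}^d_k\setminus\mathcal{X}^d_{k-1}$ is homeomorphic to the total space of a real affine bundle over the unordered configuration space $C_k(\mathbb{R})$ of rank $l_{d,k}=d(\mathbb{K})m(d-nk)+k-1$.
   Context: $\mathrm{P}^d(\mathbb{K})$ is the space of monic degree-$d$ polynomials over $\mathbb{K}$, $d(\mathbb{K})=\dim_\mathbb{R}\mathbb{K}$. For $f_k$, $\mathbf{f}_k(z)=(f_k(z),f_k(z)+f_k'(z),\dots,f_k(z)+f_k^{(n-1)}(z))$. The discriminant is $\Sigma^{d,m}_{n,\mathbb{K}}=\{(f_1,\dots,f_m)\in\mathrm{P}^d(\mathbb{K})^m:\ \mathbf{f}_1(x)=\cdots=\mathbf{f}_m(x)=0\text{ for some }x\in\mathbb{R}\}$ (tuples with a common real root of multiplicity $\ge n$). Its tautological normalization is $Z^{d,m}_{n,\mathbb{K}}=\{((f_1,\dots,f_m),x)\in\Sigma^{d,m}_{n,\mathbb{K}}\times\mathbb{R}:\mathbf{f}_1(x)=\cdots=\mathbf{f}_m(x)=0\}$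 with $\pi^{d,m}_{n,\mathbb{K}}$ the first projection. Simplicial resolution: given a surjection $h:X\to Y$ with finite fibres and an embedding $i:X\to\mathbb{R}^N$, set $\mathcal{X}^\Delta=\{(y,u)\in Y\times\mathbb{R}^N: u\in\sigma(i(h^{-1}(y)))\}$ where $\sigma(\cdot)$ is the convex hull, and $h^\Delta(y,u)=y$; it is non-degenerate if for each $y$ any $k$ points of $i(h^{-1}(y))$ span a $(k-1)$-simplex. $\mathcal{X}^\Delta_k$ is the subspace of $(y,u)$ with $u$ in the convex hull of at most $k$ points of $i(h^{-1}(y))$. $C_k(\mathbb{R})$ is the space of unordered $k$-element subsets of $\mathbb{R}$. *)

theory Defs
  imports "HOL-Analysis.Analysis" "HOL-Computational_Algebra.Polynomial"
begin

text \<open>K is either the reals (embedded in C) or the whole of C.\<close>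

definition dimK :: "complex set \<Rightarrow> nat" where
  "dimK K = (if K = \<real> then 1 else 2)"

text \<open>A tuple (f_1,...,f_m) of monic degree-d polynomials is encoded by
  c :: nat => nat => complex, where c j i (j < m, i < d) is the coefficient of
  z^i in f_(j+1); all other entries are 0.  The leading coefficient 1 is implicit.
  The topology is the (product = Euclidean) topology on the coefficients.\<close>

definition PolyTuples :: "complex set \<Rightarrow> nat \<Rightarrow> nat \<Rightarrow> (nat \<Rightarrow> nat \<Rightarrow> complex) set" where
  "PolyTuples K d m =
     {c. \<forall>j i. (j < m \<and> i < d \<longrightarrow> c j i \<in> K) \<and> (\<not> (j < m \<and> i < d) \<longrightarrow> c j i = 0)}"

definition poly_of :: "nat \<Rightarrow> (nat \<Rightarrow> complex) \<Rightarrow> complex poly" where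
  "poly_of d a = monom 1 d + (\<Sum>i<d. monom (a i) i)"

definition boldf :: "nat \<Rightarrow> complex poly \<Rightarrow> complex \<Rightarrow> complex list" where
  "boldf n f z = map (\<lambda>i. if i = 0 then poly f z else poly f z + poly ((pderiv ^^ i) f) z) [0..<n]"

definition boldf_zero :: "nat \<Rightarrow> complex poly \<Rightarrow> real \<Rightarrow> bool" where
  "boldf_zero n f x \<longleftrightarrow> (\<forall>v \<in> set (boldf n f (complex_of_real x)). v = 0)"

definition Sigma_disc :: "complex set \<Rightarrow> nat \<Rightarrow> nat \<Rightarrow> nat \<Rightarrow> (nat \<Rightarrow> nat \<Rightarrow> complex) set" where
  "Sigma_disc K d m n =
     {c \<in> PolyTuples K d m. \<exists>x::real. \<forall>j<m. boldf_zero n (poly_of d (c j)) x}"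

definition Z_taut :: "complex set \<Rightarrow> nat \<Rightarrow> nat \<Rightarrow> nat \<Rightarrow> ((nat \<Rightarrow> nat \<Rightarrow> complex) \<times> real) set" where
  "Z_taut K d m n =
     {(c, x). c \<in> Sigma_disc K d m n \<and> (\<forall>j<m. boldf_zero n (poly_of d (c j)) x)}"

text \<open>The projection pi : Z -> Sigma is fst.\<close>

definition nondegenerate_resolution ::
  "'x topology \<Rightarrow> 'y set \<Rightarrow> ('x \<Rightarrow> 'y) \<Rightarrow> ('x \<Rightarrow> 'e::euclidean_space) \<Rightarrow> bool" where
  "nondegenerate_resolution X Y h i \<longleftrightarrow>
     h ` topspace X = Y \<and>
     (\<forall>y\<in>Y. finite {x \<in> topspace X. h x = y}) \<and>
     embedding_map X euclidean i \<and>
     (\<forall>y\<in>Y. \<not> affine_dependent (i ` {x \<in> topspace X. h x = y}))"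

definition resolution_filt ::
  "'x topology \<Rightarrow> 'y set \<Rightarrow> ('x \<Rightarrow> 'y) \<Rightarrow> ('x \<Rightarrow> 'e::euclidean_space) \<Rightarrow> nat \<Rightarrow> ('y \<times> 'e) set" where
  "resolution_filt X Y h i k =
     {(y, u). y \<in> Y \<and> (\<exists>S. S \<subseteq> i ` {x \<in> topspace X. h x = y} \<and> finite S \<and> card S \<le> k
                              \<and> u \<in> convex hull S)}"

definition Conf :: "nat \<Rightarrow> real set set" where
  "Conf k = {S. finite S \<and> card S = k}"

text \<open>Topology: pulled back from R^k via the ordered coordinates x_1 < ... < x_k
  (i.e. C_k(R) is identified with the open chamber {x_1 < ... < x_k} of R^k).\<close>

definition Conf_top :: "nat \<Rightarrow> real set topology" where
  "Conf_top k = pullback_topology (Conf k)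
     (\<lambda>S i. if i < k then sorted_list_of_set S ! i else 0) (euclidean :: (nat \<Rightarrow> real) topology)"

text \<open>R^l, realised as sequences vanishing from index l on (product topology = Euclidean).\<close>

definition Rl :: "nat \<Rightarrow> (nat \<Rightarrow> real) set" where
  "Rl l = {v. \<forall>i\<ge>l. v i = 0}"

definition affine_bij_Rl :: "nat \<Rightarrow> ((nat \<Rightarrow> real) \<Rightarrow> (nat \<Rightarrow> real)) \<Rightarrow> bool" where
  "affine_bij_Rl l g \<longleftrightarrow> bij_betw g (Rl l) (Rl l) \<and>
     (\<forall>v\<in>Rl l. \<forall>w\<in>Rl l. \<forall>t::real. g (\<lambda>j. t * v j + (1 - t) * w j) = (\<lambda>j. t * g v j + (1 - t) * g w j))"

definition local_triv ::
  "'e topology \<Rightarrow> 'b topology \<Rightarrow> ('e \<Rightarrow> 'b) \<Rightarrow> nat \<Rightarrow> 'b set \<Rightarrow> ('e \<Rightarrow> 'b \<times> (nat \<Rightarrow> real)) \<Rightarrow> bool" where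
  "local_triv E B p l U \<phi> \<longleftrightarrow>
     openin B U \<and>
     homeomorphic_map (subtopology E {e \<in> topspace E. p e \<in> U})
       (prod_topology (subtopology B U) (subtopology euclidean (Rl l))) \<phi> \<and>
     (\<forall>e\<in>topspace E. p e \<in> U \<longrightarrow> fst (\<phi> e) = p e)"

definition real_affine_bundle :: "'e topology \<Rightarrow> 'b topology \<Rightarrow> ('e \<Rightarrow> 'b) \<Rightarrow> nat \<Rightarrow> bool" where
  "real_affine_bundle E B p l \<longleftrightarrow>
     continuous_map E B p \<and> p ` topspace E = topspace B \<and>
     (\<exists>\<A>. (\<forall>(U, \<phi>) \<in> \<A>. local_triv E B p l U \<phi>) \<and>
          (\<forall>b\<in>topspace B. \<exists>(U, \<phi>) \<in> \<A>. b \<in> U) \<and>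
          (\<forall>(U, \<phi>) \<in> \<A>. \<forall>(V, \<psi>) \<in> \<A>. \<forall>b \<in> U \<inter> V.
              \<exists>g. affine_bij_Rl l g \<and>
                  (\<forall>e\<in>topspace E. p e = b \<longrightarrow> snd (\<psi> e) = g (snd (\<phi> e)))))"

end

theory Submission
  imports Defs
begin


lemma tendsto_fun_iff:
  fixes f :: "'a \<Rightarrow> 'b::countable \<Rightarrow> 'c::metric_space"
  shows "(f \<longlongrightarrow> l) F \<longleftrightarrow> (\<forall>i. ((\<lambda>x. f x i) \<longlongrightarrow> l i) F)"
proof
  assume "(f \<longlongrightarrow> l) F"
  then show "\<forall>i. ((\<lambda>x. f x i) \<longlongrightarrow> l i) F"
  proof (intro allI)
    fix i
    have "isCont (\<lambda>x. x i) l" using continuous_on_product_coordinates[of i]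
      using continuous_on_eq_continuous_at open_UNIV by blast
    then show "((\<lambda>x. f x i) \<longlongrightarrow> l i) F"
      using isCont_tendsto_compose[OF _ \<open>(f \<longlongrightarrow> l) F\<close>] by blast
  qed
next
  assume H: "\<forall>i. ((\<lambda>x. f x i) \<longlongrightarrow> l i) F"
  show "(f \<longlongrightarrow> l) F"
  proof (rule topological_tendstoI)
    fix S assume "open S" "l \<in> S"
    then have "openin (product_topology (\<lambda>i. euclidean) UNIV) S" unfolding open_fun_def by auto
    from product_topology_open_contains_basis[OF this \<open>l \<in> S\<close>]
    obtain X where X: "l \<in> (\<Pi>\<^sub>E i\<in>UNIV. X i)" "\<And>i. open (X i)" "finite {i. X i \<noteq> UNIV}"
       "(\<Pi>\<^sub>E i\<in>UNIV. X i) \<subseteq> S" by auto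
    have "\<forall>\<^sub>F x in F. \<forall>i\<in>{i. X i \<noteq> UNIV}. f x i \<in> X i"
    proof (intro eventually_ball_finite ballI)
      show "finite {i. X i \<noteq> UNIV}" by (fact X(3))
      fix i
      have "l i \<in> X i" using X(1) by auto
      then show "\<forall>\<^sub>F x in F. f x i \<in> X i" using H X(2) by (simp add: tendsto_def)
    qed
    then show "\<forall>\<^sub>F x in F. f x \<in> S"
      apply (rule eventually_mono)
      using X(4) by (force simp: PiE_def extensional_def)
  qed
qed


lemma pderiv_iter_dvd:
  fixes f :: "'a::{idom,semiring_char_0} poly"
  assumes "[:-a,1:]^n dvd f" "i \<le> n"
  shows "[:-a,1:]^(n-i) dvd (pderiv^^i) f"
  using assms
proof (induction i arbitrary: f n)
  case 0 then show ?case by simp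
next
  case (Suc i)
  then obtain n' where n': "n = Suc n'" by (cases n) auto
  from Suc.prems(1) obtain q where q: "f = [:-a,1:]^(Suc n') * q" using n' by (auto elim: dvdE)
  have "pderiv f = [:- a, 1:] ^ Suc n' * pderiv q + smult (of_nat (Suc n')) (q * [:- a, 1:] ^ n')"
    unfolding q by (rule lemma_order_pderiv1)
  then have "[:-a,1:]^n' dvd pderiv f"
    by (metis dvd_add dvd_mult2 dvd_smult dvd_triv_right power_Suc)
  then have "[:-a,1:]^(n'-i) dvd (pderiv^^i) (pderiv f)"
    using Suc.IH[of n' "pderiv f"] Suc.prems n' by simp
  then show ?case using n' by (simp add: funpow_Suc_right del: funpow.simps)
qed

lemma deriv_zero_iff_dvd:
  fixes f :: "complex poly"
  shows "(\<forall>i<n. poly ((pderiv^^i) f) a = 0) \<longleftrightarrow> [:-a,1:]^n dvd f"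
proof (induction n arbitrary: f)
  case 0 then show ?case by simp
next
  case (Suc n)
  have eq: "(\<forall>i<Suc n. poly ((pderiv^^i) f) a = 0) \<longleftrightarrow>
        poly f a = 0 \<and> (\<forall>i<n. poly ((pderiv^^i) (pderiv f)) a = 0)"
    by (auto simp: less_Suc_eq_0_disj funpow_Suc_right simp del: funpow.simps)
  show ?case
  proof
    assume L: "\<forall>i<Suc n. poly ((pderiv^^i) f) a = 0"
    then have r: "poly f a = 0" and d: "[:-a,1:]^n dvd pderiv f" using eq Suc.IH by auto
    show "[:-a,1:]^Suc n dvd f"
    proof (cases "f = 0")
      case True then show ?thesis by simp
    next
      case False
      show ?thesis
      proof (cases "pderiv f = 0")
        case True
        then obtain c where "f = [:c:]" using pderiv_iszero by blast
        then show ?thesis using r False by simp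
      next
        case F2: False
        have "order a f = Suc (order a (pderiv f))" using order_pderiv[OF False r] .
        moreover have "n \<le> order a (pderiv f)" using d F2 order_divides by blast
        ultimately have "Suc n \<le> order a f" by simp
        then show ?thesis using order_divides by blast
      qed
    qed
  next
    assume R: "[:-a,1:]^Suc n dvd f"
    then have "poly f a = 0" by (metis dvd_power dvd_trans poly_eq_0_iff_dvd zero_less_Suc)
    moreover have "[:-a,1:]^n dvd pderiv f" using pderiv_iter_dvd[OF R, of 1] by simp
    ultimately show "\<forall>i<Suc n. poly ((pderiv^^i) f) a = 0" using eq Suc.IH by auto
  qed
qed

lemma boldf_zero_expand: "boldf_zero n f x \<longleftrightarrow> (\<forall>i<n. (if i = 0 then poly f (complex_of_real x)
       else poly f (complex_of_real x) + poly ((pderiv ^^ i) f) (complex_of_real x)) = 0)"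
proof -
  define g where "g = (\<lambda>i. if i = 0 then poly f (complex_of_real x)
       else poly f (complex_of_real x) + poly ((pderiv ^^ i) f) (complex_of_real x))"
  have "set (boldf n f (complex_of_real x)) = g ` {0..<n}"
    unfolding boldf_def g_def by (simp only: set_map set_upt)
  then have "boldf_zero n f x \<longleftrightarrow> (\<forall>i<n. g i = 0)" unfolding boldf_zero_def by auto
  then show ?thesis by (simp only: g_def)
qed

lemma boldf_zero_iff:
  "boldf_zero n f x \<longleftrightarrow> (\<forall>i<n. poly ((pderiv^^i) f) (complex_of_real x) = 0)"
proof -
  define z where "z = complex_of_real x"
  have 1: "boldf_zero n f x \<longleftrightarrow> (\<forall>i<n. (if i = 0 then poly f z
       else poly f z + poly ((pderiv ^^ i) f) z) = 0)"
    unfolding z_def by (rule boldf_zero_expand)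
  show ?thesis
  proof (cases n)
    case 0 then show ?thesis using 1 by simp
  next
    case (Suc n')
    show ?thesis unfolding 1 z_def[symmetric]
    proof
      assume H: "\<forall>i<n. (if i = 0 then poly f z else poly f z + poly ((pderiv ^^ i) f) z) = 0"
      then have P0: "poly f z = 0" using Suc by (metis zero_less_Suc)
      show "\<forall>i<n. poly ((pderiv ^^ i) f) z = 0"
      proof (intro allI impI)
        fix i assume "i < n"
        then show "poly ((pderiv ^^ i) f) z = 0" using H P0
          by (cases "i = 0") (simp, metis add_0)
      qed
    next
      assume H: "\<forall>i<n. poly ((pderiv ^^ i) f) z = 0"
      then have P0: "poly f z = 0" using Suc by (metis funpow_0 zero_less_Suc)
      show "\<forall>i<n. (if i = 0 then poly f z else poly f z + poly ((pderiv ^^ i) f) z) = 0"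
        using H P0 by simp
    qed
  qed
qed

lemma boldf_zero_dvd:
  "boldf_zero n f x \<longleftrightarrow> [:-complex_of_real x,1:]^n dvd f"
  by (simp add: boldf_zero_iff deriv_zero_iff_dvd)

lemma prod_dvd_roots:
  fixes f :: "complex poly"
  assumes "finite A" "inj_on c A" "\<forall>r\<in>A. [:-c r,1:]^n dvd f"
  shows "(\<Prod>r\<in>A. [:-c r,1:]^n) dvd f"
  using assms
proof (induction A rule: finite_induct)
  case empty then show ?case by simp
next
  case (insert b A)
  then have IH: "(\<Prod>r\<in>A. [:-c r,1:]^n) dvd f" by auto
  then obtain s where s: "f = (\<Prod>r\<in>A. [:-c r,1:]^n) * s" by (auto elim: dvdE)
  have bdvd: "[:-c b,1:]^n dvd f" using insert by auto
  have "[:-c b,1:]^n dvd s"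
  proof (cases "f = 0")
    case True then show ?thesis using s by (simp add: insert.hyps(1))
  next
    case False
    have nz: "(\<Prod>r\<in>A. [:-c r,1:]^n) * s \<noteq> 0" using False s by simp
    have "poly (\<Prod>r\<in>A. [:-c r,1:]^n) (c b) \<noteq> 0"
      using insert.prems(1) insert.hyps by (auto simp: poly_prod)
    then have "order (c b) (\<Prod>r\<in>A. [:-c r,1:]^n) = 0" by (rule order_0I)
    then have "order (c b) f = order (c b) s" using order_mult[OF nz] s by simp
    moreover have "n \<le> order (c b) f" using bdvd False order_divides by blast
    moreover have "s \<noteq> 0" using nz by auto
    ultimately show ?thesis using order_divides by auto
  qed
  then show ?case using s insert.hyps by (simp add: mult_dvd_mono mult.commute)
qed

lemma coeff_mult_monic_shift:
  fixes g h :: "'a::comm_ring_1 poly"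
  assumes "degree g = N" "coeff g N = 1"
  shows "coeff (g*h) (N+i) = coeff h i + (\<Sum>a<N. coeff g a * coeff h (N+i-a))"
proof -
  have "coeff (g*h) (N+i) = (\<Sum>a\<le>N+i. coeff g a * coeff h (N+i-a))" by (rule coeff_mult)
  also have "\<dots> = (\<Sum>a\<in>{..<N} \<union> {N} \<union> {N<..N+i}. coeff g a * coeff h (N+i-a))"
    by (rule sum.cong) auto
  also have "\<dots> = (\<Sum>a<N. coeff g a * coeff h (N+i-a)) + coeff h i
       + (\<Sum>a\<in>{N<..N+i}. coeff g a * coeff h (N+i-a))"
    using assms by (subst sum.union_disjoint; auto)+
  also have "(\<Sum>a\<in>{N<..N+i}. coeff g a * coeff h (N+i-a)) = 0"
    using assms by (intro sum.neutral) (auto simp: coeff_eq_0)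
  finally show ?thesis by simp
qed

lemma down_induct:
  fixes P :: "nat \<Rightarrow> bool"
  assumes "\<And>i. e \<le> i \<Longrightarrow> P i" "\<And>i. i < e \<Longrightarrow> (\<And>j. i < j \<Longrightarrow> P j) \<Longrightarrow> P i"
  shows "P i"
proof (induction "e - i" arbitrary: i rule: less_induct)
  case less
  show ?case
  proof (cases "e \<le> i")
    case True then show ?thesis using assms by auto
  next
    case False
    then show ?thesis using assms(2)[of i] less by (metis diff_less_mono2 not_le)
  qed
qed


definition cconv :: "(nat \<Rightarrow> complex poly) \<Rightarrow> complex poly \<Rightarrow> bool" where
  "cconv P p \<longleftrightarrow> (\<forall>i. (\<lambda>n. coeff (P n) i) \<longlonglongrightarrow> coeff p i)"

lemma cconv_const: "cconv (\<lambda>n. p) p"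
  by (simp add: cconv_def)

lemma cconv_add: "cconv P p \<Longrightarrow> cconv Q q \<Longrightarrow> cconv (\<lambda>n. P n + Q n) (p + q)"
  by (auto simp: cconv_def intro: tendsto_add)

lemma cconv_mult: "cconv P p \<Longrightarrow> cconv Q q \<Longrightarrow> cconv (\<lambda>n. P n * Q n) (p * q)"
  unfolding cconv_def coeff_mult by (auto intro!: tendsto_sum tendsto_mult)

lemma cconv_power: "cconv P p \<Longrightarrow> cconv (\<lambda>n. P n ^ k) (p ^ k)"
  by (induction k) (auto intro: cconv_mult cconv_const)

lemma cconv_prod:
  assumes "finite A" "\<And>r. r \<in> A \<Longrightarrow> cconv (F r) (f r)"
  shows "cconv (\<lambda>n. \<Prod>r\<in>A. F r n) (\<Prod>r\<in>A. f r)"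
  using assms by (induction A rule: finite_induct) (auto intro: cconv_mult cconv_const)

lemma cconv_lin: "X \<longlonglongrightarrow> x \<Longrightarrow> cconv (\<lambda>n. [:- X n, 1:]) [:- x, 1:]"
  unfolding cconv_def
proof
  fix i assume "X \<longlonglongrightarrow> x"
  then show "(\<lambda>n. coeff [:- X n, 1:] i) \<longlonglongrightarrow> coeff [:- x, 1:] i"
    by (cases i) (auto simp: coeff_pCons intro: tendsto_minus split: nat.split)
qed

lemma cconv_pderiv: "cconv P p \<Longrightarrow> cconv (\<lambda>n. pderiv (P n)) (pderiv p)"
  unfolding cconv_def coeff_pderiv by (auto intro: tendsto_mult)

lemma cconv_pderiv_iter: "cconv P p \<Longrightarrow> cconv (\<lambda>n. (pderiv^^i) (P n)) ((pderiv^^i) p)"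
  by (induction i) (auto intro: cconv_pderiv)

lemma degree_pderiv_iter_le: "degree ((pderiv^^i) (p::complex poly)) \<le> degree p"
  by (induction i) (auto simp: degree_pderiv intro: le_trans)

lemma poly_bounded_degree:
  fixes p :: "complex poly"
  assumes "degree p \<le> D"
  shows "poly p z = (\<Sum>i\<le>D. coeff p i * z ^ i)"
proof -
  have "poly p z = (\<Sum>i\<le>degree p. coeff p i * z ^ i)" by (simp add: poly_altdef)
  also have "\<dots> = (\<Sum>i\<le>D. coeff p i * z ^ i)"
    using assms by (intro sum.mono_neutral_left) (auto simp: coeff_eq_0)
  finally show ?thesis .
qed

lemma cconv_poly:
  assumes "cconv P p" "\<And>n. degree (P n) \<le> D" "degree p \<le> D" "Z \<longlonglongrightarrow> z"
  shows "(\<lambda>n. poly (P n) (Z n)) \<longlonglongrightarrow> poly p z"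
proof -
  have "(\<lambda>n. \<Sum>i\<le>D. coeff (P n) i * Z n ^ i) \<longlonglongrightarrow> (\<Sum>i\<le>D. coeff p i * z ^ i)"
    using assms(1,4) unfolding cconv_def by (auto intro!: tendsto_sum tendsto_mult tendsto_power)
  moreover have "poly (P n) (Z n) = (\<Sum>i\<le>D. coeff (P n) i * Z n ^ i)" for n
    using assms(2) by (rule poly_bounded_degree)
  moreover have "poly p z = (\<Sum>i\<le>D. coeff p i * z ^ i)"
    using assms(3) by (rule poly_bounded_degree)
  ultimately show ?thesis by simp
qed

lemma coeff_poly_of: "coeff (poly_of d a) i = (if i = d then 1 else if i < d then a i else 0)"
proof -
  have "coeff (poly_of d a) i = (if d = i then 1 else 0) + (\<Sum>j<d. if j = i then a j else 0)"
    unfolding poly_of_def by (simp add: coeff_sum coeff_monom)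
  also have "(\<Sum>j<d. if j = i then a j else 0) = (if i < d then a i else 0)"
    by (simp add: sum.delta)
  finally show ?thesis by auto
qed

lemma degree_poly_of: "degree (poly_of d a) = d"
proof (rule antisym)
  show "degree (poly_of d a) \<le> d" by (rule degree_le) (auto simp: coeff_poly_of)
  show "d \<le> degree (poly_of d a)" by (rule le_degree) (simp add: coeff_poly_of)
qed

lemma poly_of_nonzero: "poly_of d a \<noteq> 0"
  using coeff_poly_of[of d a d] by auto

lemma poly_of_coeff:
  assumes "degree p = d" "coeff p d = 1"
  shows "poly_of d (coeff p) = p"
  by (rule poly_eqI) (auto simp: coeff_poly_of assms coeff_eq_0)

lemma poly_of_cong: "(\<And>i. i < d \<Longrightarrow> a i = b i) \<Longrightarrow> poly_of d a = poly_of d b"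
  by (rule poly_eqI) (auto simp: coeff_poly_of)

lemma cconv_poly_of: "(\<And>i. i < d \<Longrightarrow> (\<lambda>n. A n i) \<longlonglongrightarrow> a i) \<Longrightarrow> cconv (\<lambda>n. poly_of d (A n)) (poly_of d a)"
  unfolding cconv_def coeff_poly_of by auto

lemma cconv_shift_quotient:
  assumes G: "cconv G g" and GN: "\<And>n. degree (G n) = N" "\<And>n. coeff (G n) N = 1"
    and HH: "\<And>n j. e \<le> j \<Longrightarrow> coeff (H n) j = coeff h j"
    and F: "cconv (\<lambda>n. G n * H n) (g * h)"
  shows "cconv H h"
  unfolding cconv_def
proof
  fix i
  show "(\<lambda>n. coeff (H n) i) \<longlonglongrightarrow> coeff h i"
  proof (induction i rule: down_induct[where e = e])
    case (1 i) then show ?case using HH by simp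
  next
    case (2 i)
    have gN: "degree g = N" "coeff g N = 1"
    proof -
      have "(\<lambda>n. coeff (G n) N) \<longlonglongrightarrow> coeff g N" using G by (simp add: cconv_def)
      moreover have "(\<lambda>n. coeff (G n) N) \<longlonglongrightarrow> 1" using GN(2) by simp
      ultimately show c1: "coeff g N = 1" using LIMSEQ_unique by blast
      have "\<forall>j>N. coeff g j = 0"
      proof (intro allI impI)
        fix j assume "N < j"
        have "(\<lambda>n. coeff (G n) j) \<longlonglongrightarrow> coeff g j" using G by (simp add: cconv_def)
        moreover have "coeff (G n) j = 0" for n using GN(1) \<open>N<j\<close> by (simp add: coeff_eq_0)
        then have "(\<lambda>n. coeff (G n) j) \<longlonglongrightarrow> 0" by simp
        ultimately show "coeff g j = 0" using LIMSEQ_unique by blast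
      qed
      then have "degree g \<le> N" by (intro degree_le) auto
      moreover have "N \<le> degree g" using c1 by (intro le_degree) simp
      ultimately show "degree g = N" by simp
    qed
    have eqn: "coeff (H n) i = coeff (G n * H n) (N+i) - (\<Sum>a<N. coeff (G n) a * coeff (H n) (N+i-a))" for n
      using coeff_mult_monic_shift[OF GN(1,2)] by simp
    have eq: "coeff h i = coeff (g * h) (N+i) - (\<Sum>a<N. coeff g a * coeff h (N+i-a))"
      using coeff_mult_monic_shift[OF gN] by simp
    have "(\<lambda>n. coeff (G n * H n) (N+i) - (\<Sum>a<N. coeff (G n) a * coeff (H n) (N+i-a)))
          \<longlonglongrightarrow> coeff (g * h) (N+i) - (\<Sum>a<N. coeff g a * coeff h (N+i-a))"
      using F G 2 by (auto simp: cconv_def intro!: tendsto_diff tendsto_sum tendsto_mult)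
    then show ?case unfolding eqn eq .
  qed
qed


lemma aff_coeff_unique:
  fixes A :: "'a::euclidean_space set"
  assumes "\<not> affine_dependent A" "T \<subseteq> A" "finite T" "sum w T = sum w' T"
    "(\<Sum>a\<in>T. w a *\<^sub>R a) = (\<Sum>a\<in>T. w' a *\<^sub>R a)" "a \<in> T"
  shows "w a = w' a"
proof (rule ccontr)
  assume ne: "w a \<noteq> w' a"
  have "affine_dependent A"
    unfolding affine_dependent_explicit
  proof (intro exI conjI)
    show "finite T" "T \<subseteq> A" by fact+
    show "sum (\<lambda>b. w b - w' b) T = 0" using assms(4) by (simp add: sum_subtractf)
    show "\<exists>v\<in>T. w v - w' v \<noteq> 0" using ne assms(6) by auto
    show "(\<Sum>b\<in>T. (w b - w' b) *\<^sub>R b) = 0" using assms(5)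
      by (simp add: scaleR_diff_left sum_subtractf)
  qed
  then show False using assms(1) by simp
qed

lemma aff_support:
  fixes A :: "'a::euclidean_space set"
  assumes A: "\<not> affine_dependent A" and T: "T \<subseteq> A" and w: "\<forall>a\<in>T. w a > 0" "sum w T = 1"
    and u: "u = (\<Sum>a\<in>T. w a *\<^sub>R a)" and T': "T' \<subseteq> A" "u \<in> convex hull T'"
  shows "T \<subseteq> T'"
proof -
  have fA: "finite A" using A aff_independent_finite by blast
  then have fT: "finite T" "finite T'" using T T' finite_subset by auto
  have "u \<in> convex hull T" unfolding convex_hull_finite[OF fT(1)] using w u
    by (auto intro!: exI[of _ w] less_imp_le)
  moreover have "\<not> affine_dependent (T \<union> T')" using A T T' affine_dependent_subset by blast
  ultimately have "u \<in> convex hull (T \<inter> T')" using T' convex_hull_Int by blast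
  then obtain c where c: "\<forall>x\<in>T\<inter>T'. 0 \<le> c x" "sum c (T\<inter>T') = 1" "(\<Sum>x\<in>T\<inter>T'. c x *\<^sub>R x) = u"
    unfolding convex_hull_finite[OF finite_Int[OF disjI1[OF fT(1)]]] by auto
  define c' where "c' x = (if x \<in> T' then c x else 0)" for x
  have s1: "sum c' T = sum c (T\<inter>T')" unfolding c'_def
    using fT by (simp add: sum.inter_restrict)
  have s2: "(\<Sum>x\<in>T. c' x *\<^sub>R x) = (\<Sum>x\<in>T\<inter>T'. c x *\<^sub>R x)"
  proof -
    have "(\<Sum>x\<in>T. c' x *\<^sub>R x) = (\<Sum>x\<in>T. if x \<in> T' then c x *\<^sub>R x else 0)"
      unfolding c'_def by (intro sum.cong) auto
    also have "\<dots> = (\<Sum>x\<in>T\<inter>T'. c x *\<^sub>R x)" using fT by (simp add: sum.inter_restrict)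
    finally show ?thesis .
  qed
  show ?thesis
  proof
    fix a assume a: "a \<in> T"
    have "w a = c' a"
      by (rule aff_coeff_unique[OF A T fT(1) _ _ a]) (use w u c s1 s2 in auto)
    then show "a \<in> T'" using w a unfolding c'_def by (auto split: if_splits)
  qed
qed

lemma aff_coeff_unique_idx:
  fixes p :: "nat \<Rightarrow> 'a::euclidean_space"
  assumes "\<not> affine_dependent A" "p ` {..<k} \<subseteq> A" "inj_on p {..<k}"
    "(\<Sum>r<k. t r) = (\<Sum>r<k. t' r)" "(\<Sum>r<k. t r *\<^sub>R p r) = (\<Sum>r<k. t' r *\<^sub>R p r)" "r < k"
  shows "t r = t' r"
proof -
  define q where "q = inv_into {..<k} p"
  have qp: "q (p s) = s" if "s < k" for s using assms(3) that by (simp add: q_def)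
  have "(\<lambda>a. t (q a)) (p r) = (\<lambda>a. t' (q a)) (p r)"
  proof (rule aff_coeff_unique[OF assms(1,2)])
    show "finite (p ` {..<k})" by simp
    show "sum (\<lambda>a. t (q a)) (p ` {..<k}) = sum (\<lambda>a. t' (q a)) (p ` {..<k})"
      using assms(3,4) qp by (simp add: sum.reindex)
    show "(\<Sum>a\<in>p ` {..<k}. t (q a) *\<^sub>R a) = (\<Sum>a\<in>p ` {..<k}. t' (q a) *\<^sub>R a)"
      using assms(3,5) qp by (simp add: sum.reindex)
    show "p r \<in> p ` {..<k}" using assms(6) by simp
  qed
  then show ?thesis using qp assms(6) by simp
qed

lemma aff_support_idx:
  fixes p :: "nat \<Rightarrow> 'a::euclidean_space"
  assumes A: "\<not> affine_dependent A" "p ` {..<k} \<subseteq> A" "inj_on p {..<k}"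
    and t: "\<forall>r<k. t r > 0" "(\<Sum>r<k. t r) = 1" and u: "u = (\<Sum>r<k. t r *\<^sub>R p r)"
    and T': "T' \<subseteq> A" "u \<in> convex hull T'"
  shows "p ` {..<k} \<subseteq> T'"
proof -
  define q where "q = inv_into {..<k} p"
  have qp: "q (p s) = s" if "s < k" for s using A(3) that by (simp add: q_def)
  show ?thesis
  proof (rule aff_support[OF A(1,2) _ _ _ T'])
    show "\<forall>a\<in>p ` {..<k}. t (q a) > 0" using t qp by auto
    show "sum (\<lambda>a. t (q a)) (p ` {..<k}) = 1" using A(3) t qp by (simp add: sum.reindex)
    show "u = (\<Sum>a\<in>p ` {..<k}. t (q a) *\<^sub>R a)" using A(3) u qp by (simp add: sum.reindex)
  qed
qed

lemma root_bound:
  fixes a :: "nat \<Rightarrow> complex"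
  assumes "poly (poly_of d a) z = 0"
  shows "norm z \<le> 1 + (\<Sum>i<d. norm (a i))"
proof (cases "norm z \<le> 1")
  case True
  have "0 \<le> (\<Sum>i<d. norm (a i))" by (simp add: sum_nonneg)
  then show ?thesis using True by linarith
next
  case False
  define S where "S = (\<Sum>i<d. norm (a i))"
  have pz: "z ^ d + (\<Sum>i<d. a i * z ^ i) = 0" using assms
    by (simp add: poly_of_def poly_sum poly_monom)
  show ?thesis
  proof (cases d)
    case 0 then show ?thesis using pz by simp
  next
    case (Suc d')
    have "z ^ d = - (\<Sum>i<d. a i * z ^ i)" using pz by (simp add: eq_neg_iff_add_eq_0)
    then have "norm z ^ d = norm (\<Sum>i<d. a i * z ^ i)"
      by (simp only: norm_power[symmetric] norm_minus_cancel)
    also have "\<dots> \<le> (\<Sum>i<d. norm (a i) * norm z ^ i)"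
      by (rule order_trans[OF norm_sum]) (simp add: norm_mult norm_power)
    also have "\<dots> \<le> (\<Sum>i<d. norm (a i) * norm z ^ d')"
      using False Suc by (intro sum_mono mult_left_mono power_increasing) auto
    also have "\<dots> = S * norm z ^ d'" unfolding S_def by (simp add: sum_distrib_right)
    finally have "norm z * norm z ^ d' \<le> S * norm z ^ d'" using Suc by simp
    moreover have "norm z > 0" using False by linarith
    then have "norm z ^ d' > 0" by simp
    ultimately have "norm z \<le> S" by (simp add: mult_le_cancel_right)
    then show ?thesis unfolding S_def by simp
  qed
qed

lemma subseq_limit_unique:
  fixes a :: "nat \<Rightarrow> 'a::metric_space"
  assumes C: "compact C" "\<forall>n. a n \<in> C"
    and H: "\<And>s l. strict_mono s \<Longrightarrow> (a \<circ> s) \<longlonglongrightarrow> l \<Longrightarrow> l = a0"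
  shows "a \<longlonglongrightarrow> a0"
proof (rule ccontr)
  assume "\<not> a \<longlonglongrightarrow> a0"
  then obtain e where e: "e > 0" "\<forall>N. \<exists>n\<ge>N. \<not> dist (a n) a0 < e"
    unfolding lim_sequentially by blast
  define S where "S = {n. \<not> dist (a n) a0 < e}"
  have "infinite S" unfolding infinite_nat_iff_unbounded_le S_def mem_Collect_eq using e(2) by blast
  then obtain r :: "nat \<Rightarrow> nat" where r: "strict_mono r" "\<forall>n. r n \<in> S" using infinite_enumerate by blast
  have "seq_compact C" using C(1) compact_imp_seq_compact by blast
  moreover have "\<forall>n. (a \<circ> r) n \<in> C" using C(2) by simp
  ultimately obtain l q where lq: "l \<in> C" "strict_mono q" "((a \<circ> r) \<circ> q) \<longlonglongrightarrow> l"
    by (rule seq_compactE)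
  have "strict_mono (r \<circ> q)" using lq(2) r(1) by (rule strict_mono_o[rotated])
  moreover have "(a \<circ> (r \<circ> q)) \<longlonglongrightarrow> l" using lq(3) by (simp add: comp_assoc)
  ultimately have "l = a0" by (rule H)
  then have "((a \<circ> r) \<circ> q) \<longlonglongrightarrow> a0" using lq(3) by simp
  then obtain N where "\<forall>n\<ge>N. dist (((a \<circ> r) \<circ> q) n) a0 < e" using e(1) unfolding lim_sequentially by blast
  then have "dist (a (r (q N))) a0 < e" by simp
  moreover have "r (q N) \<in> S" using r(2) by blast
  ultimately show False unfolding S_def by simp
qed

lemma compact_box:
  fixes S :: "nat \<Rightarrow> real set"
  assumes "\<And>r. compact (S r)"
  shows "compact {x. \<forall>r. x r \<in> S r}"
proof -
  have "compactin (product_topology (\<lambda>_. euclidean) UNIV) (PiE UNIV S)"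
    using assms by (simp add: compactin_PiE compactin_euclidean_iff)
  then have "compact (PiE UNIV S)" by (simp add: euclidean_product_topology compactin_euclidean_iff)
  moreover have "PiE UNIV S = {x. \<forall>r. x r \<in> S r}" by (auto simp: PiE_def Pi_def)
  ultimately show ?thesis by simp
qed

definition Ch :: "nat \<Rightarrow> (nat \<Rightarrow> real) set" where
  "Ch k = {x. (\<forall>a b. a < b \<longrightarrow> b < k \<longrightarrow> x a < x b) \<and> (\<forall>r\<ge>k. x r = 0)}"

definition sig :: "nat \<Rightarrow> real set \<Rightarrow> nat \<Rightarrow> real" where
  "sig k S = (\<lambda>i. if i < k then sorted_list_of_set S ! i else 0)"

lemma Ch_inj: assumes "x \<in> Ch k" shows "inj_on x {..<k}"
proof (rule inj_onI)
  fix a b assume ab: "a \<in> {..<k}" "b \<in> {..<k}" "x a = x b"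
  have m: "\<And>a b. a < b \<Longrightarrow> b < k \<Longrightarrow> x a < x b" using assms unfolding Ch_def by blast
  show "a = b"
  proof (rule ccontr)
    assume "a \<noteq> b"
    then consider "a < b" | "b < a" by linarith
    then show False using m ab by cases force+
  qed
qed

lemma Ch_list: "x \<in> Ch k \<Longrightarrow> sorted_list_of_set (x ` {..<k}) = map x [0..<k]"
proof -
  assume x: "x \<in> Ch k"
  have "sorted_wrt (<) (map x [0..<k])"
    using x unfolding Ch_def by (auto simp: sorted_wrt_iff_nth_less)
  then have "sorted (map x [0..<k])" "distinct (map x [0..<k])"
    using strict_sorted_iff by auto
  moreover have "set (map x [0..<k]) = x ` {..<k}" by auto
  ultimately show ?thesis by (metis sorted_list_of_set.idem_if_sorted_distinct)
qed

lemma Ch_sig: "x \<in> Ch k \<Longrightarrow> sig k (x ` {..<k}) = x"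
  unfolding sig_def using Ch_list by (auto simp: Ch_def)

lemma Ch_eq: assumes "x \<in> Ch k" "x' \<in> Ch k" "x ` {..<k} = x' ` {..<k}" shows "x = x'"
proof -
  have "x = sig k (x ` {..<k})" using Ch_sig[OF assms(1)] by simp
  also have "\<dots> = sig k (x' ` {..<k})" using assms(3) by simp
  also have "\<dots> = x'" using Ch_sig[OF assms(2)] .
  finally show ?thesis .
qed

lemma Ch_Conf: "x \<in> Ch k \<Longrightarrow> x ` {..<k} \<in> Conf k"
  unfolding Conf_def using Ch_inj by (auto simp: card_image)

lemma sig_Ch: assumes "S \<in> Conf k" shows "sig k S \<in> Ch k" "sig k S ` {..<k} = S"
proof -
  have S: "finite S" "card S = k" using assms by (auto simp: Conf_def)
  have L: "length (sorted_list_of_set S) = k" "sorted_wrt (<) (sorted_list_of_set S)"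
    using S by auto
  show "sig k S \<in> Ch k" unfolding Ch_def sig_def using L
    by (auto simp: sorted_wrt_iff_nth_less)
  have "sig k S ` {..<k} = set (sorted_list_of_set S)" unfolding sig_def using L(1)
    by (auto simp: in_set_conv_nth image_iff)
  then show "sig k S ` {..<k} = S" using S by simp
qed


definition Kpoly :: "complex set \<Rightarrow> complex poly \<Rightarrow> bool" where
  "Kpoly K p \<longleftrightarrow> (\<forall>j. coeff p j \<in> K)"

lemma Kpoly_mult:
  assumes "K = \<real> \<or> K = UNIV" "Kpoly K p" "Kpoly K q" shows "Kpoly K (p * q)"
  using assms unfolding Kpoly_def coeff_mult
  by (auto intro!: sum_in_Reals Reals_mult)

lemma Kpoly_power:
  assumes "K = \<real> \<or> K = UNIV" "Kpoly K p" shows "Kpoly K (p ^ r)"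
proof (induction r)
  case 0 then show ?case using assms(1) by (auto simp: Kpoly_def coeff_1)
next
  case (Suc r) then show ?case using assms Kpoly_mult by simp
qed

lemma Kpoly_prod:
  assumes "K = \<real> \<or> K = UNIV" "\<And>r. r \<in> A \<Longrightarrow> Kpoly K (f r)" shows "Kpoly K (prod f A)"
  using assms
proof (induction A rule: infinite_finite_induct)
  case (infinite A) then show ?case by (auto simp: Kpoly_def coeff_1)
next
  case empty then show ?case by (auto simp: Kpoly_def coeff_1)
next
  case (insert a A) then show ?case using Kpoly_mult by simp
qed

lemma Kpoly_lin: "K = \<real> \<or> K = UNIV \<Longrightarrow> Kpoly K [:- complex_of_real a, 1:]"
  by (auto simp: Kpoly_def coeff_pCons split: nat.split)

lemma dimK_cases: "K = \<real> \<or> K = UNIV \<Longrightarrow> (K = \<real> \<and> dimK K = 1) \<or> (K = UNIV \<and> dimK K = 2)"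
proof -
  have "\<i> \<notin> \<real>" by (simp add: complex_is_Real_iff)
  then have "(UNIV::complex set) \<noteq> \<real>" by blast
  then show "K = \<real> \<or> K = UNIV \<Longrightarrow> ?thesis" by (auto simp: dimK_def)
qed

locale LS =
  fixes K :: "complex set" and d m n k :: nat
    and i :: "(nat \<Rightarrow> nat \<Rightarrow> complex) \<times> real \<Rightarrow> real ^ 'N"
  assumes K: "K = \<real> \<or> K = UNIV" and d1: "d \<ge> 1" and m1: "m \<ge> 1" and n1: "n \<ge> 1"
    and nd: "nondegenerate_resolution (subtopology euclidean (Z_taut K d m n)) (Sigma_disc K d m n) fst i"
    and k1: "1 \<le> k" and kd: "k \<le> d div n"
begin

abbreviation "Z \<equiv> Z_taut K d m n"
abbreviation "Y \<equiv> Sigma_disc K d m n"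
definition "e = d - n * k"
definition "dK = dimK K"
definition "L1 = dK * m * e"

definition gp :: "(nat \<Rightarrow> real) \<Rightarrow> complex poly" where
  "gp x = (\<Prod>r<k. [:- complex_of_real (x r), 1:] ^ n)"
definition hc :: "(nat \<Rightarrow> real) \<Rightarrow> nat \<Rightarrow> nat \<Rightarrow> complex" where
  "hc v j a = Complex (v (dK * (j * e + a))) (if dK = 2 then v (dK * (j * e + a) + 1) else 0)"
definition hp :: "(nat \<Rightarrow> real) \<Rightarrow> nat \<Rightarrow> complex poly" where
  "hp v j = poly_of e (hc v j)"
definition Yc :: "(nat \<Rightarrow> real) \<Rightarrow> (nat \<Rightarrow> real) \<Rightarrow> nat \<Rightarrow> nat \<Rightarrow> complex" where
  "Yc x v = (\<lambda>j a. if j < m \<and> a < d then coeff (gp x * hp v j) a else 0)"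
definition ww :: "(nat \<Rightarrow> real) \<Rightarrow> nat \<Rightarrow> real" where
  "ww v r = (if Suc r < k then exp (v (L1 + r)) else 1)"
definition tw :: "(nat \<Rightarrow> real) \<Rightarrow> nat \<Rightarrow> real" where
  "tw v r = (if r < k then ww v r / (\<Sum>s<k. ww v s) else 0)"
definition psi :: "(nat \<Rightarrow> real) \<times> (nat \<Rightarrow> real) \<Rightarrow> (nat \<Rightarrow> nat \<Rightarrow> complex) \<times> (real ^ 'N)" where
  "psi xv = (Yc (fst xv) (snd xv), \<Sum>r<k. tw (snd xv) r *\<^sub>R i (Yc (fst xv) (snd xv), fst xv r))"

definition "Xk j = resolution_filt (subtopology euclidean Z) Y fst i j"
definition "Dset = Xk k - Xk (k - 1)"
definition "M = Ch k \<times> Rl (L1 + k - 1)"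

lemma nk_le_d: "n * k \<le> d"
proof -
  have "n * k \<le> n * (d div n)" using kd by simp
  also have "\<dots> \<le> d" by simp
  finally show ?thesis .
qed

lemma d_eq: "d = n * k + e" using nk_le_d unfolding e_def by simp

lemma topZ: "topspace (subtopology euclidean Z) = Z" by simp

lemma i_cont: "continuous_on Z i"
proof -
  have "embedding_map (subtopology euclidean Z) euclidean i" using nd by (simp add: nondegenerate_resolution_def)
  then have "continuous_map (subtopology euclidean Z) euclidean i"
    unfolding embedding_map_def using homeomorphic_imp_continuous_map continuous_map_in_subtopology by blast
  then show ?thesis by (simp add: continuous_map_iff_continuous)
qed

lemma i_inj: "inj_on i Z"
proof -
  have "embedding_map (subtopology euclidean Z) euclidean i" using nd by (simp add: nondegenerate_resolution_def)
  then show ?thesis unfolding embedding_map_def using homeomorphic_imp_injective_map by fastforce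
qed

lemma fib_indep: "y \<in> Y \<Longrightarrow> \<not> affine_dependent (i ` {z \<in> Z. fst z = y})"
  using nd by (simp add: nondegenerate_resolution_def)

lemma Xk_iff: "(y, u) \<in> Xk j \<longleftrightarrow> y \<in> Y \<and> (\<exists>S. S \<subseteq> i ` {z \<in> Z. fst z = y} \<and> finite S \<and> card S \<le> j \<and> u \<in> convex hull S)"
  by (simp add: Xk_def resolution_filt_def)

lemma gp_lin_dvd: "r < k \<Longrightarrow> [:- complex_of_real (x r), 1:] ^ n dvd gp x"
  unfolding gp_def by (rule dvd_prodI) auto

lemma gp_monic: "degree (gp x) = n * k" "coeff (gp x) (n * k) = 1"
proof -
  have nz: "[:- complex_of_real (x r), 1:] ^ n \<noteq> 0" for r by simp
  show "degree (gp x) = n * k" unfolding gp_def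
    by (subst degree_prod_sum_eq) (auto simp: degree_power_eq)
  then have "coeff (gp x) (n * k) = lead_coeff (gp x)" by simp
  also have "\<dots> = 1" unfolding gp_def lead_coeff_prod lead_coeff_power by simp
  finally show "coeff (gp x) (n * k) = 1" .
qed

lemma gp_K: "Kpoly K (gp x)"
  unfolding gp_def by (intro Kpoly_prod Kpoly_power Kpoly_lin K)

lemma gp_nz: "gp x \<noteq> 0" using gp_monic(2)[of x] by auto

lemma hp_monic: "degree (hp v j) = e" "coeff (hp v j) e = 1"
  unfolding hp_def by (simp_all add: degree_poly_of coeff_poly_of)

lemma hp_K: "Kpoly K (hp v j)"
  using dimK_cases[OF K] unfolding Kpoly_def hp_def coeff_poly_of hc_def dK_def
  by (auto simp: Complex_in_Reals)

lemma prod_monic: "degree (gp x * hp v j) = d" "coeff (gp x * hp v j) d = 1"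
proof -
  have "hp v j \<noteq> 0" unfolding hp_def by (rule poly_of_nonzero)
  then show "degree (gp x * hp v j) = d" using gp_nz hp_monic gp_monic d_eq
    by (simp add: degree_mult_eq)
  have "coeff (gp x * hp v j) d = lead_coeff (gp x * hp v j)"
    using \<open>degree (gp x * hp v j) = d\<close> by simp
  also have "\<dots> = 1" using gp_monic hp_monic by (simp add: lead_coeff_mult)
  finally show "coeff (gp x * hp v j) d = 1" .
qed

lemma poly_of_Yc: "j < m \<Longrightarrow> poly_of d (Yc x v j) = gp x * hp v j"
proof -
  assume j: "j < m"
  have "poly_of d (Yc x v j) = poly_of d (coeff (gp x * hp v j))"
    by (rule poly_of_cong) (simp add: Yc_def j)
  also have "\<dots> = gp x * hp v j" by (rule poly_of_coeff[OF prod_monic])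
  finally show ?thesis .
qed

lemma Yc_in_Z: assumes "r < k" shows "Yc x v \<in> Y" "(Yc x v, x r) \<in> Z"
proof -
  have bz: "boldf_zero n (poly_of d (Yc x v j)) (x s)" if "j < m" "s < k" for j s
    unfolding boldf_zero_dvd poly_of_Yc[OF that(1)] using gp_lin_dvd[OF that(2)] by (rule dvd_mult2)
  have PT: "Yc x v \<in> PolyTuples K d m"
    using prod_monic hp_K gp_K Kpoly_mult[OF K] unfolding PolyTuples_def Yc_def Kpoly_def
    using K by auto
  show "Yc x v \<in> Y" unfolding Sigma_disc_def using PT bz assms by blast
  then show "(Yc x v, x r) \<in> Z" unfolding Z_taut_def using bz assms by blast
qed


lemma ww_pos: "ww v r > 0" by (simp add: ww_def)

lemma ww_sum_pos: "(\<Sum>s<k. ww v s) > 0"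
proof -
  have "0 \<in> {..<k}" using k1 by simp
  then have "{..<k} \<noteq> {}" by blast
  then show ?thesis by (intro sum_pos) (auto intro: ww_pos)
qed

lemma tw_pos: "r < k \<Longrightarrow> tw v r > 0"
  using ww_sum_pos ww_pos by (simp add: tw_def)

lemma tw_sum: "(\<Sum>r<k. tw v r) = 1"
proof -
  have "(\<Sum>r<k. tw v r) = (\<Sum>r<k. ww v r / (\<Sum>s<k. ww v s))" by (simp add: tw_def)
  also have "\<dots> = 1" using ww_sum_pos[of v] by (simp add: sum_divide_distrib[symmetric])
  finally show ?thesis .
qed

lemma pts_props:
  assumes x: "x \<in> Ch k" and yZ: "\<forall>r<k. (y, x r) \<in> Z"
  shows "inj_on (\<lambda>r. i (y, x r)) {..<k}" "(\<lambda>r. i (y, x r)) ` {..<k} \<subseteq> i ` {z \<in> Z. fst z = y}"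
proof -
  show "inj_on (\<lambda>r. i (y, x r)) {..<k}"
  proof (rule inj_onI)
    fix a b assume ab: "a \<in> {..<k}" "b \<in> {..<k}" "i (y, x a) = i (y, x b)"
    then have "(y, x a) = (y, x b)" using i_inj yZ unfolding inj_on_def by blast
    then show "a = b" using Ch_inj[OF x] ab unfolding inj_on_def by auto
  qed
  show "(\<lambda>r. i (y, x r)) ` {..<k} \<subseteq> i ` {z \<in> Z. fst z = y}" using yZ by auto
qed

lemma in_D_crit:
  assumes x: "x \<in> Ch k" and y: "y \<in> Y" and yZ: "\<forall>r<k. (y, x r) \<in> Z"
    and t: "\<forall>r<k. t r > 0" "(\<Sum>r<k. t r) = 1"
  shows "(y, \<Sum>r<k. t r *\<^sub>R i (y, x r)) \<in> Dset"
proof -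
  define p where "p r = i (y, x r)" for r
  define A where "A = i ` {z \<in> Z. fst z = y}"
  define u where "u = (\<Sum>r<k. t r *\<^sub>R p r)"
  have pinj: "inj_on p {..<k}" and pA: "p ` {..<k} \<subseteq> A"
    using pts_props[OF x yZ] unfolding p_def A_def by auto
  have indep: "\<not> affine_dependent A" unfolding A_def by (rule fib_indep[OF y])
  have cardp: "card (p ` {..<k}) = k" using pinj by (simp add: card_image)
  have "u \<in> convex hull (p ` {..<k})" unfolding u_def
    by (rule convex_sum) (use t in \<open>auto intro: less_imp_le hull_inc\<close>)
  then have in1: "(y, u) \<in> Xk k" unfolding Xk_iff A_def using y pA cardp unfolding A_def
    by (intro conjI exI[of _ "p ` {..<k}"]) auto
  have "(y, u) \<notin> Xk (k - 1)"
  proof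
    assume "(y, u) \<in> Xk (k - 1)"
    then obtain S' where S': "S' \<subseteq> A" "finite S'" "card S' \<le> k - 1" "u \<in> convex hull S'"
      unfolding Xk_iff A_def by blast
    have "p ` {..<k} \<subseteq> S'" by (rule aff_support_idx[OF indep pA pinj t u_def S'(1,4)])
    then have "k \<le> card S'" using cardp card_mono[OF S'(2)] by metis
    then show False using S'(3) k1 by linarith
  qed
  then show ?thesis using in1 unfolding Dset_def u_def p_def by simp
qed

lemma psi_in_D: assumes x: "x \<in> Ch k" shows "psi (x, v) \<in> Dset"
proof -
  have "0 < k" using k1 by simp
  then have "(Yc x v, \<Sum>r<k. tw v r *\<^sub>R i (Yc x v, x r)) \<in> Dset"
    by (intro in_D_crit[OF x] tw_pos tw_sum Yc_in_Z(1)[of 0] Yc_in_Z(2) allI impI)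
  then show ?thesis by (simp add: psi_def)
qed

end


context LS begin

definition enc :: "(nat \<Rightarrow> complex poly) \<Rightarrow> (nat \<Rightarrow> real) \<Rightarrow> nat \<Rightarrow> real" where
  "enc h t idx = (if idx < L1 then
      (if idx mod dK = 0 then Re (coeff (h (idx div dK div e)) (idx div dK mod e))
       else Im (coeff (h (idx div dK div e)) (idx div dK mod e)))
     else if idx < L1 + k - 1 then ln (t (idx - L1) / t (k - 1)) else 0)"

lemma dK_cases: "(K = \<real> \<and> dK = 1) \<or> (K = UNIV \<and> dK = 2)"
  using dimK_cases[OF K] by (simp add: dK_def)

lemma dK_pos: "dK > 0" using dK_cases by auto

lemma idx_decomp:
  assumes "idx < L1"
  shows "idx div dK div e < m" "idx div dK mod e < e"
    "dK * ((idx div dK div e) * e + idx div dK mod e) + idx mod dK = idx"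
    "idx mod dK < dK"
proof -
  have "idx < m * e * dK" using assms unfolding L1_def by (simp add: ac_simps)
  then have q: "idx div dK < m * e" using div_less_iff_less_mult[OF dK_pos] by blast
  then have e0: "e > 0" by (cases e) auto
  show "idx div dK div e < m" using q e0 by (simp add: div_less_iff_less_mult)
  show "idx div dK mod e < e" using e0 by simp
  show "dK * ((idx div dK div e) * e + idx div dK mod e) + idx mod dK = idx"
    by (simp add: mult.commute)
  show "idx mod dK < dK" using dK_pos by simp
qed

lemma enc_cong:
  assumes "\<And>j. j < m \<Longrightarrow> h j = h' j" "\<And>r. r < k \<Longrightarrow> t r = t' r"
  shows "enc h t = enc h' t'"
proof
  fix idx
  show "enc h t idx = enc h' t' idx"
  proof (cases "idx < L1")
    case True then show ?thesis using idx_decomp[OF True] assms(1) by (simp add: enc_def)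
  next
    case False
    then show ?thesis using assms(2) k1 by (simp add: enc_def)
  qed
qed

lemma tw_ratio: "r < k \<Longrightarrow> tw v r / tw v (k - 1) = ww v r"
proof -
  assume r: "r < k"
  have "k - 1 < k" using k1 by simp
  moreover have "ww v (k - 1) = 1" using k1 by (simp add: ww_def)
  ultimately show ?thesis using r ww_sum_pos[of v] by (simp add: tw_def)
qed

lemma enc_dec: assumes v: "v \<in> Rl (L1 + k - 1)" shows "enc (hp v) (tw v) = v"
proof
  fix idx
  show "enc (hp v) (tw v) idx = v idx"
  proof (cases "idx < L1")
    case True
    note D = idx_decomp[OF True]
    define q where "q = idx div dK"
    define b where "b = idx mod dK"
    have c: "coeff (hp v (q div e)) (q mod e) = Complex (v (dK * q)) (if dK = 2 then v (dK * q + 1) else 0)"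
      using D unfolding hp_def coeff_poly_of hc_def q_def by simp
    have idx: "idx = dK * q + b" unfolding q_def b_def by simp
    show ?thesis
    proof (cases "b = 0")
      case True then show ?thesis using c \<open>idx < L1\<close> idx unfolding enc_def q_def[symmetric] b_def[symmetric] by simp
    next
      case False
      then have "dK = 2" "b = 1" using dK_cases D(4) unfolding b_def by auto
      then show ?thesis using c \<open>idx < L1\<close> idx False unfolding enc_def q_def[symmetric] b_def[symmetric] by simp
    qed
  next
    case False
    show ?thesis
    proof (cases "idx < L1 + k - 1")
      case True
      then have r: "idx - L1 < k" "Suc (idx - L1) < k" using False by auto
      have "ln (tw v (idx - L1) / tw v (k - 1)) = v idx"
        using tw_ratio[OF r(1)] r(2) False by (simp add: ww_def)
      then show ?thesis using False True by (simp add: enc_def)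
    next
      case F2: False
      then show ?thesis using False v by (simp add: enc_def Rl_def)
    qed
  qed
qed

lemma enc_props:
  assumes h: "\<And>j. j < m \<Longrightarrow> degree (h j) = e \<and> coeff (h j) e = 1 \<and> Kpoly K (h j)"
    and t: "\<forall>r<k. t r > 0" "(\<Sum>r<k. t r) = 1"
  shows "enc h t \<in> Rl (L1 + k - 1)" "\<And>j. j < m \<Longrightarrow> hp (enc h t) j = h j"
    "\<And>r. r < k \<Longrightarrow> tw (enc h t) r = t r"
proof -
  show "enc h t \<in> Rl (L1 + k - 1)" unfolding Rl_def
  proof (intro CollectI allI impI)
    fix idx assume "L1 + k - 1 \<le> idx"
    then have "\<not> idx < L1" "\<not> idx < L1 + k - 1" using k1 by auto
    then show "enc h t idx = 0" by (simp add: enc_def)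
  qed
  show "hp (enc h t) j = h j" if j: "j < m" for j
  proof (rule poly_eqI)
    fix a
    show "coeff (hp (enc h t) j) a = coeff (h j) a"
    proof (cases "a < e")
      case True
      define q where "q = j * e + a"
      have "j * e + a < Suc j * e" using True by simp
      also have "\<dots> \<le> m * e" using j by (intro mult_le_mono1) simp
      finally have qlt: "q < m * e" unfolding q_def .
      have ql: "dK * q < L1" "dK * q + 1 < L1 \<or> dK = 1" using qlt dK_cases unfolding L1_def by auto
      have qd: "q div e = j" "q mod e = a" unfolding q_def using True by auto
      have "coeff (hp (enc h t) j) a = Complex (enc h t (dK * q)) (if dK = 2 then enc h t (dK * q + 1) else 0)"
        unfolding hp_def coeff_poly_of hc_def q_def using True by simp
      also have "\<dots> = coeff (h j) a"
      proof (cases "dK = 1")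
        case True
        then have "K = \<real>" using dK_cases by auto
        then have "coeff (h j) a \<in> \<real>" using h[OF j] by (simp add: Kpoly_def)
        then show ?thesis using True ql qd by (simp add: enc_def complex_eq_iff complex_is_Real_iff)
      next
        case False
        then have "dK = 2" using dK_cases by auto
        moreover have "(2 * q + 1) div 2 = q" "(2 * q + 1) mod 2 = 1" by auto
        ultimately show ?thesis using ql qd by (simp add: enc_def complex_eq_iff)
      qed
      finally show ?thesis .
    next
      case False
      then show ?thesis using h[OF j] by (auto simp: hp_def coeff_poly_of coeff_eq_0)
    qed
  qed
  have tk: "t (k - 1) > 0" using t k1 by simp
  have ww: "ww (enc h t) r = t r / t (k - 1)" if "r < k" for r
  proof (cases "Suc r < k")
    case True
    then have "ww (enc h t) r = exp (ln (t r / t (k - 1)))" by (simp add: ww_def enc_def)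
    also have "\<dots> = t r / t (k - 1)" using t that tk by simp
    finally show ?thesis .
  next
    case False
    then have "r = k - 1" using that by simp
    then show ?thesis using False tk by (simp add: ww_def)
  qed
  have "(\<Sum>s<k. ww (enc h t) s) = (\<Sum>s<k. t s / t (k - 1))" using ww by simp
  also have "\<dots> = 1 / t (k - 1)" using t by (simp add: sum_divide_distrib[symmetric])
  finally have S: "(\<Sum>s<k. ww (enc h t) s) = 1 / t (k - 1)" .
  show "tw (enc h t) r = t r" if "r < k" for r
    using that ww[OF that] S tk by (simp add: tw_def)
qed

end


lemma monic_quotient:
  fixes f g h :: "complex poly"
  assumes "f = g * h" "degree f = N + E" "coeff f (N+E) = 1" "degree g = N" "coeff g N = 1"
  shows "degree h = E" "coeff h E = 1"
proof -
  have f0: "f \<noteq> 0" using assms(3) by auto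
  then have "g \<noteq> 0" "h \<noteq> 0" using assms(1) by auto
  then have dh: "degree f = N + degree h" using assms(1,4) by (simp add: degree_mult_eq)
  then show "degree h = E" using assms(2) by simp
  have "lead_coeff f = lead_coeff g * lead_coeff h" using assms(1) by (simp add: lead_coeff_mult)
  then show "coeff h E = 1" using assms dh by simp
qed

lemma quotient_real:
  fixes f g h :: "complex poly"
  assumes "f = g * h" "degree g = N" "coeff g N = 1" "\<forall>a. coeff f a \<in> \<real>" "\<forall>a. coeff g a \<in> \<real>"
    "degree h = E" "coeff h E = 1"
  shows "coeff h a \<in> \<real>"
proof (induction a rule: down_induct[where e = E])
  case (1 a)
  then show ?case using assms(6,7) by (cases "a = E") (auto simp: coeff_eq_0)
next
  case (2 a)
  have "coeff h a = coeff f (N+a) - (\<Sum>b<N. coeff g b * coeff h (N+a-b))"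
    using coeff_mult_monic_shift[OF assms(2,3), of h a] assms(1) by simp
  also have "\<dots> \<in> \<real>" using assms(4,5) 2
    by (intro Reals_diff sum_in_Reals Reals_mult) auto
  finally show ?case .
qed

context LS begin

lemma onto:
  assumes yu: "(y, u) \<in> Dset"
  shows "\<exists>x v. x \<in> Ch k \<and> v \<in> Rl (L1 + k - 1) \<and> psi (x, v) = (y, u)"
proof -
  define A where "A = i ` {z \<in> Z. fst z = y}"
  from yu have in1: "(y, u) \<in> Xk k" and nin: "(y, u) \<notin> Xk (k - 1)" by (auto simp: Dset_def)
  then obtain S where y: "y \<in> Y" and S: "S \<subseteq> A" "finite S" "card S \<le> k" "u \<in> convex hull S"
    unfolding Xk_iff A_def by blast
  have cS: "card S = k"
  proof (rule ccontr)
    assume "card S \<noteq> k"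
    then have "card S \<le> k - 1" using S(3) by simp
    then have "(y, u) \<in> Xk (k - 1)" using y S unfolding Xk_iff A_def by blast
    then show False using nin by simp
  qed
  obtain w where w: "\<forall>a\<in>S. 0 \<le> w a" "sum w S = 1" "(\<Sum>a\<in>S. w a *\<^sub>R a) = u"
    using S(4) unfolding convex_hull_finite[OF S(2)] by blast
  have wpos: "w a > 0" if a: "a \<in> S" for a
  proof (rule ccontr)
    assume "\<not> w a > 0"
    then have wa: "w a = 0" using w(1) a by force
    have "u \<in> convex hull (S - {a})" unfolding convex_hull_finite[OF finite_Diff[OF S(2)]]
    proof (intro CollectI exI[of _ w] conjI)
      show "\<forall>x\<in>S - {a}. 0 \<le> w x" using w by auto
      show "sum w (S - {a}) = 1" using w(2) wa a S(2) by (simp add: sum_diff1)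
      show "(\<Sum>x\<in>S - {a}. w x *\<^sub>R x) = u" using w(3) wa a S(2) by (simp add: sum_diff1)
    qed
    moreover have "card (S - {a}) \<le> k - 1" using cS a S(2) by simp
    ultimately have "(y, u) \<in> Xk (k - 1)" using y S unfolding Xk_iff A_def
      by (intro conjI exI[of _ "S - {a}"]) auto
    then show False using nin by simp
  qed
  define R where "R = {s. (y, s) \<in> Z \<and> i (y, s) \<in> S}"
  have imR: "(\<lambda>s. i (y, s)) ` R = S" using S(1) unfolding R_def A_def by force
  have injR: "inj_on (\<lambda>s. i (y, s)) R" using i_inj unfolding R_def inj_on_def by blast
  have fR: "finite R" using imR injR S(2) finite_imageD by blast
  have cR: "card R = k" using imR injR cS card_image by fastforce
  define x where "x = sig k R"
  have RC: "R \<in> Conf k" using fR cR by (simp add: Conf_def)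
  have x: "x \<in> Ch k" "x ` {..<k} = R" using sig_Ch[OF RC] by (auto simp: x_def)
  have xZ: "(y, x r) \<in> Z" "i (y, x r) \<in> S" if "r < k" for r
    using x(2) that unfolding R_def by auto
  define p where "p r = i (y, x r)" for r
  have pinj: "inj_on p {..<k}" and pA: "p ` {..<k} \<subseteq> A"
    using pts_props[OF x(1)] xZ unfolding p_def A_def by auto
  have "p ` {..<k} = (\<lambda>s. i (y, s)) ` (x ` {..<k})" unfolding p_def by auto
  then have pS: "p ` {..<k} = S" using imR x(2) by simp
  define t where "t r = w (p r)" for r
  have tpos: "\<forall>r<k. t r > 0" using wpos pS unfolding t_def by auto
  have "(\<Sum>r<k. w (p r)) = sum w (p ` {..<k})" using pinj by (simp add: sum.reindex)
  then have tsum: "(\<Sum>r<k. t r) = 1" using w(2) pS unfolding t_def by simp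
  have "(\<Sum>r<k. w (p r) *\<^sub>R p r) = (\<Sum>a\<in>p ` {..<k}. w a *\<^sub>R a)" using pinj by (simp add: sum.reindex)
  then have usum: "u = (\<Sum>r<k. t r *\<^sub>R p r)" using w(3) pS unfolding t_def by simp
  have PT: "y \<in> PolyTuples K d m" using y by (simp add: Sigma_disc_def)
  have fdvd: "gp x dvd poly_of d (y j)" if j: "j < m" for j
  proof -
    have "(\<Prod>r\<in>{..<k}. [:- (complex_of_real \<circ> x) r, 1:] ^ n) dvd poly_of d (y j)"
    proof (rule prod_dvd_roots)
      show "inj_on (complex_of_real \<circ> x) {..<k}" using Ch_inj[OF x(1)] by (simp add: inj_on_def)
      show "\<forall>r\<in>{..<k}. [:- (complex_of_real \<circ> x) r, 1:] ^ n dvd poly_of d (y j)"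
        using xZ j unfolding Z_taut_def by (auto simp: boldf_zero_dvd[symmetric])
    qed simp
    then show ?thesis unfolding gp_def by simp
  qed
  have "\<forall>j. \<exists>h. j < m \<longrightarrow> poly_of d (y j) = gp x * h" using fdvd by (meson dvdE)
  then obtain h where h: "\<And>j. j < m \<Longrightarrow> poly_of d (y j) = gp x * h j" by metis
  have hprops: "degree (h j) = e \<and> coeff (h j) e = 1 \<and> Kpoly K (h j)" if j: "j < m" for j
  proof -
    have dd: "degree (poly_of d (y j)) = n * k + e" "coeff (poly_of d (y j)) (n * k + e) = 1"
      using d_eq by (simp_all add: degree_poly_of coeff_poly_of)
    note mq = monic_quotient[OF h[OF j] dd gp_monic]
    have "Kpoly K (h j)"
    proof (cases "K = \<real>")
      case True
      have "coeff (poly_of d (y j)) a \<in> \<real>" for a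
        using PT True j unfolding PolyTuples_def by (auto simp: coeff_poly_of)
      moreover have "coeff (gp x) a \<in> \<real>" for a using gp_K True by (simp add: Kpoly_def)
      ultimately show ?thesis unfolding Kpoly_def True
        using quotient_real[OF h[OF j] gp_monic _ _ mq] by blast
    next
      case False then show ?thesis using K by (simp add: Kpoly_def)
    qed
    then show ?thesis using mq by simp
  qed
  define v where "v = enc h t"
  have ep1: "v \<in> Rl (L1 + k - 1)" unfolding v_def by (rule enc_props(1)) (use hprops tpos tsum in auto)
  have ep2: "hp v j = h j" if "j < m" for j unfolding v_def by (rule enc_props(2)) (use hprops tpos tsum that in auto)
  have ep3: "tw v r = t r" if "r < k" for r unfolding v_def by (rule enc_props(3)) (use hprops tpos tsum that in auto)
  have Yeq: "Yc x v = y"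
  proof (intro ext)
    fix j a
    show "Yc x v j a = y j a"
    proof (cases "j < m \<and> a < d")
      case True
      then have "coeff (gp x * hp v j) a = coeff (poly_of d (y j)) a" using ep2 h by simp
      then show ?thesis using True by (simp add: Yc_def coeff_poly_of)
    next
      case False
      then show ?thesis using PT by (auto simp: Yc_def PolyTuples_def)
    qed
  qed
  have "psi (x, v) = (y, u)"
    unfolding psi_def using Yeq usum ep3 by (simp add: p_def)
  then show ?thesis using x(1) ep1 by blast
qed

lemma psi_inj:
  assumes "x \<in> Ch k" "x' \<in> Ch k" "v \<in> Rl (L1 + k - 1)" "v' \<in> Rl (L1 + k - 1)"
    "psi (x, v) = psi (x', v')"
  shows "x = x'" "v = v'"
proof -
  define y where "y = Yc x v"
  have yy: "Yc x' v' = y" using assms(5) by (simp add: psi_def y_def)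
  have uu: "(\<Sum>r<k. tw v r *\<^sub>R i (y, x r)) = (\<Sum>r<k. tw v' r *\<^sub>R i (y, x' r))"
    using assms(5) by (simp add: psi_def y_def yy)
  have y: "y \<in> Y" using Yc_in_Z(1)[of 0] k1 unfolding y_def by simp
  have xZ: "\<forall>r<k. (y, x r) \<in> Z" using Yc_in_Z(2) unfolding y_def by blast
  have x'Z: "\<forall>r<k. (y, x' r) \<in> Z" using Yc_in_Z(2) yy by metis
  define A where "A = i ` {z \<in> Z. fst z = y}"
  have indep: "\<not> affine_dependent A" unfolding A_def by (rule fib_indep[OF y])
  note P = pts_props[OF assms(1) xZ, folded A_def]
  note P' = pts_props[OF assms(2) x'Z, folded A_def]
  have h1: "(\<lambda>r. i (y, x r)) ` {..<k} \<subseteq> (\<lambda>r. i (y, x' r)) ` {..<k}"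
  proof (rule aff_support_idx[OF indep P(2,1)])
    show "\<forall>r<k. tw v r > 0" by (simp add: tw_pos)
    show "(\<Sum>r<k. tw v r) = 1" by (rule tw_sum)
    show "(\<Sum>r<k. tw v' r *\<^sub>R i (y, x' r)) = (\<Sum>r<k. tw v r *\<^sub>R i (y, x r))" using uu by simp
    show "(\<Sum>r<k. tw v' r *\<^sub>R i (y, x' r)) \<in> convex hull ((\<lambda>r. i (y, x' r)) ` {..<k})"
      by (rule convex_sum) (auto simp: tw_sum intro: less_imp_le tw_pos hull_inc)
  qed (use P' in auto)
  have h2: "(\<lambda>r. i (y, x' r)) ` {..<k} \<subseteq> (\<lambda>r. i (y, x r)) ` {..<k}"
  proof (rule aff_support_idx[OF indep P'(2,1)])
    show "\<forall>r<k. tw v' r > 0" by (simp add: tw_pos)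
    show "(\<Sum>r<k. tw v' r) = 1" by (rule tw_sum)
    show "(\<Sum>r<k. tw v r *\<^sub>R i (y, x r)) = (\<Sum>r<k. tw v' r *\<^sub>R i (y, x' r))" using uu by simp
    show "(\<Sum>r<k. tw v r *\<^sub>R i (y, x r)) \<in> convex hull ((\<lambda>r. i (y, x r)) ` {..<k})"
      by (rule convex_sum) (auto simp: tw_sum intro: less_imp_le tw_pos hull_inc)
  qed (use P in auto)
  have "x ` {..<k} = x' ` {..<k}"
  proof -
    have *: "x1 ` {..<k} \<subseteq> x2 ` {..<k}"
      if "(\<lambda>r. i (y, x1 r)) ` {..<k} \<subseteq> (\<lambda>r. i (y, x2 r)) ` {..<k}"
         "\<forall>r<k. (y, x1 r) \<in> Z" "\<forall>r<k. (y, x2 r) \<in> Z" for x1 x2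
    proof
      fix a assume "a \<in> x1 ` {..<k}"
      then obtain r where r: "r < k" "a = x1 r" by auto
      have "i (y, x1 r) \<in> (\<lambda>r. i (y, x2 r)) ` {..<k}" using that(1) r by auto
      then obtain r' where r': "r' < k" "i (y, x1 r) = i (y, x2 r')" by auto
      then have "(y, x1 r) = (y, x2 r')" using i_inj that(2,3) r unfolding inj_on_def by blast
      then show "a \<in> x2 ` {..<k}" using r r' by auto
    qed
    show ?thesis using *[OF h1 xZ x'Z] *[OF h2 x'Z xZ] by blast
  qed
  then show xx: "x = x'" using Ch_eq assms(1,2) by blast
  have tt: "tw v r = tw v' r" if "r < k" for r
    using aff_coeff_unique_idx[OF indep P(2,1), of "tw v" "tw v'"] uu xx that
    by (simp add: tw_sum)
  have hh: "hp v j = hp v' j" if j: "j < m" for j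
  proof -
    have "gp x * hp v j = gp x * hp v' j"
      using poly_of_Yc[OF j, of x v] poly_of_Yc[OF j, of x' v'] yy xx unfolding y_def by simp
    then show ?thesis using gp_nz by simp
  qed
  have "v = enc (hp v) (tw v)" using enc_dec[OF assms(3)] by simp
  also have "\<dots> = enc (hp v') (tw v')" by (rule enc_cong) (use hh tt in auto)
  also have "\<dots> = v'" using enc_dec[OF assms(4)] .
  finally show "v = v'" .
qed

end


context LS begin

lemma cconv_gp: "(\<And>r. (\<lambda>l. X l r) \<longlonglongrightarrow> x r) \<Longrightarrow> cconv (\<lambda>l. gp (X l)) (gp x)"
  unfolding gp_def by (intro cconv_prod cconv_power cconv_lin tendsto_of_real) auto

lemma cconv_hp: "(\<And>r. (\<lambda>l. V l r) \<longlonglongrightarrow> v r) \<Longrightarrow> cconv (\<lambda>l. hp (V l) j) (hp v j)"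
  unfolding hp_def hc_def by (intro cconv_poly_of tendsto_Complex) auto

lemma tw_tendsto: "(\<And>r. (\<lambda>l. V l r) \<longlonglongrightarrow> v r) \<Longrightarrow> (\<lambda>l. tw (V l) r) \<longlonglongrightarrow> tw v r"
proof -
  assume H: "\<And>r. (\<lambda>l. V l r) \<longlonglongrightarrow> v r"
  have w: "(\<lambda>l. ww (V l) s) \<longlonglongrightarrow> ww v s" for s
    unfolding ww_def by (auto intro!: tendsto_exp H)
  show ?thesis unfolding tw_def
    using ww_sum_pos[of v] by (auto intro!: tendsto_divide tendsto_sum w)
qed

lemma Yc_tendsto:
  assumes "\<And>r. (\<lambda>l. X l r) \<longlonglongrightarrow> x r" "\<And>r. (\<lambda>l. V l r) \<longlonglongrightarrow> v r"
  shows "(\<lambda>l. Yc (X l) (V l)) \<longlonglongrightarrow> Yc x v"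
  unfolding tendsto_fun_iff
proof (intro allI)
  fix j a
  have "cconv (\<lambda>l. gp (X l) * hp (V l) j) (gp x * hp v j)"
    by (intro cconv_mult cconv_gp cconv_hp assms)
  then show "(\<lambda>l. Yc (X l) (V l) j a) \<longlonglongrightarrow> Yc x v j a"
    unfolding Yc_def cconv_def by auto
qed

lemma i_tendsto:
  assumes "\<forall>l. P l \<in> Z" "P0 \<in> Z" "P \<longlonglongrightarrow> P0"
  shows "(\<lambda>l. i (P l)) \<longlonglongrightarrow> i P0"
  using i_cont assms unfolding continuous_on_sequentially comp_def by blast

lemma psi_cont: "continuous_on M psi"
proof (rule continuous_on_sequentiallyI)
  fix s :: "nat \<Rightarrow> (nat \<Rightarrow> real) \<times> (nat \<Rightarrow> real)" and a
  assume sM: "\<forall>l. s l \<in> M" and aM: "a \<in> M" and lim: "s \<longlonglongrightarrow> a"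
  define X where "X l = fst (s l)" for l
  define V where "V l = snd (s l)" for l
  obtain x v where a: "a = (x, v)" by fastforce
  have X: "(\<lambda>l. X l r) \<longlonglongrightarrow> x r" for r
    using tendsto_fst[OF lim] unfolding X_def a tendsto_fun_iff by simp
  have V: "(\<lambda>l. V l r) \<longlonglongrightarrow> v r" for r
    using tendsto_snd[OF lim] unfolding V_def a tendsto_fun_iff by simp
  have XCh: "X l \<in> Ch k" for l using sM unfolding M_def X_def by (auto simp: mem_Times_iff)
  have xCh: "x \<in> Ch k" using aM unfolding M_def a by auto
  have Y: "(\<lambda>l. Yc (X l) (V l)) \<longlonglongrightarrow> Yc x v" by (rule Yc_tendsto[OF X V])
  have "(\<lambda>l. \<Sum>r<k. tw (V l) r *\<^sub>R i (Yc (X l) (V l), X l r)) \<longlonglongrightarrow> (\<Sum>r<k. tw v r *\<^sub>R i (Yc x v, x r))"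
  proof (intro tendsto_sum tendsto_scaleR tw_tendsto V)
    fix r assume "r \<in> {..<k}"
    then have r: "r < k" by simp
    show "(\<lambda>l. i (Yc (X l) (V l), X l r)) \<longlonglongrightarrow> i (Yc x v, x r)"
      by (rule i_tendsto) (use Yc_in_Z(2)[OF r] tendsto_Pair[OF Y X] in auto)
  qed
  then have "(\<lambda>l. psi (X l, V l)) \<longlonglongrightarrow> psi (x, v)"
    unfolding psi_def using Y by (simp add: tendsto_Pair)
  moreover have "s l = (X l, V l)" for l by (simp add: X_def V_def)
  ultimately show "(\<lambda>l. psi (s l)) \<longlonglongrightarrow> psi a" using a by simp
qed

end


context LS begin

lemma tw_le1: "tw v r \<le> 1"
proof (cases "r < k")
  case True
  have "ww v r \<le> (\<Sum>s<k. ww v s)" using True by (intro member_le_sum) (auto intro: less_imp_le ww_pos)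
  then show ?thesis using True ww_sum_pos[of v] by (simp add: tw_def)
next
  case False then show ?thesis by (simp add: tw_def)
qed

lemma set_eq_from_pts:
  assumes "(\<lambda>r. i (y, x1 r)) ` {..<k} \<subseteq> (\<lambda>r. i (y, x2 r)) ` {..<k}"
     "\<forall>r<k. (y, x1 r) \<in> Z" "\<forall>r<k. (y, x2 r) \<in> Z"
  shows "x1 ` {..<k} \<subseteq> x2 ` {..<k}"
proof
  fix a assume "a \<in> x1 ` {..<k}"
  then obtain r where r: "r < k" "a = x1 r" by auto
  have "i (y, x1 r) \<in> (\<lambda>r. i (y, x2 r)) ` {..<k}" using assms(1) r by auto
  then obtain r' where r': "r' < k" "i (y, x1 r) = i (y, x2 r')" by auto
  then have "(y, x1 r) = (y, x2 r')" using i_inj assms(2,3) r unfolding inj_on_def by blast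
  then show "a \<in> x2 ` {..<k}" using r r' by auto
qed

lemma rep_unique:
  assumes y: "y \<in> Y" and x: "x \<in> Ch k" "x' \<in> Ch k"
    and xZ: "\<forall>r<k. (y, x r) \<in> Z" "\<forall>r<k. (y, x' r) \<in> Z"
    and t: "\<forall>r<k. t r > 0" "(\<Sum>r<k. t r) = 1" and t': "\<forall>r<k. t' r \<ge> 0" "(\<Sum>r<k. t' r) = 1"
    and eq: "(\<Sum>r<k. t r *\<^sub>R i (y, x r)) = (\<Sum>r<k. t' r *\<^sub>R i (y, x' r))"
  shows "x = x'" "\<forall>r<k. t r = t' r"
proof -
  define A where "A = i ` {z \<in> Z. fst z = y}"
  have indep: "\<not> affine_dependent A" unfolding A_def by (rule fib_indep[OF y])
  note P = pts_props[OF x(1) xZ(1), folded A_def]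
  note P' = pts_props[OF x(2) xZ(2), folded A_def]
  have h1: "(\<lambda>r. i (y, x r)) ` {..<k} \<subseteq> (\<lambda>r. i (y, x' r)) ` {..<k}"
  proof (rule aff_support_idx[OF indep P(2,1) t])
    show "(\<Sum>r<k. t' r *\<^sub>R i (y, x' r)) = (\<Sum>r<k. t r *\<^sub>R i (y, x r))" using eq by simp
    show "(\<Sum>r<k. t' r *\<^sub>R i (y, x' r)) \<in> convex hull ((\<lambda>r. i (y, x' r)) ` {..<k})"
      by (rule convex_sum) (use t' in \<open>auto intro: hull_inc\<close>)
  qed (use P' in auto)
  have "card ((\<lambda>r. i (y, x r)) ` {..<k}) = card ((\<lambda>r. i (y, x' r)) ` {..<k})"
    using P(1) P'(1) by (simp add: card_image)
  then have "(\<lambda>r. i (y, x r)) ` {..<k} = (\<lambda>r. i (y, x' r)) ` {..<k}"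
    using h1 by (intro card_subset_eq) auto
  then have "x ` {..<k} = x' ` {..<k}"
    using set_eq_from_pts[OF _ xZ(1,2)] set_eq_from_pts[OF _ xZ(2,1)] by blast
  then show xx: "x = x'" using Ch_eq x by blast
  show "\<forall>r<k. t r = t' r"
    using aff_coeff_unique_idx[OF indep P(2,1), of t t'] eq xx t(2) t'(2) by simp
qed

end


context LS begin

lemma gp_root: "r < k \<Longrightarrow> poly (gp x) (complex_of_real (x r)) = 0"
proof -
  assume r: "r < k"
  have "[:- complex_of_real (x r), 1:] dvd [:- complex_of_real (x r), 1:] ^ n"
    using n1 by (simp add: dvd_power)
  then have "[:- complex_of_real (x r), 1:] dvd gp x" using gp_lin_dvd[OF r] dvd_trans by blast
  then show ?thesis by (simp add: poly_eq_0_iff_dvd)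
qed

lemma Z_limit:
  assumes y: "y \<in> Y" and YL: "\<And>j a. (\<lambda>l. YY l j a) \<longlonglongrightarrow> y j a"
    and XL: "XX \<longlonglongrightarrow> x0" and inZ: "\<forall>l. (YY l, XX l) \<in> Z"
  shows "(y, x0) \<in> Z"
proof -
  have "boldf_zero n (poly_of d (y j)) x0" if j: "j < m" for j
    unfolding boldf_zero_iff
  proof (intro allI impI)
    fix a assume "a < n"
    have z: "poly ((pderiv ^^ a) (poly_of d (YY l j))) (complex_of_real (XX l)) = 0" for l
      using inZ j \<open>a < n\<close> unfolding Z_taut_def boldf_zero_iff by auto
    have "(\<lambda>l. poly ((pderiv ^^ a) (poly_of d (YY l j))) (complex_of_real (XX l)))
          \<longlonglongrightarrow> poly ((pderiv ^^ a) (poly_of d (y j))) (complex_of_real x0)"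
    proof (rule cconv_poly)
      show "cconv (\<lambda>l. (pderiv ^^ a) (poly_of d (YY l j))) ((pderiv ^^ a) (poly_of d (y j)))"
        by (intro cconv_pderiv_iter cconv_poly_of YL)
      show "degree ((pderiv ^^ a) (poly_of d (YY l j))) \<le> d" for l
        by (rule order_trans[OF degree_pderiv_iter_le]) (simp add: degree_poly_of)
      show "degree ((pderiv ^^ a) (poly_of d (y j))) \<le> d"
        by (rule order_trans[OF degree_pderiv_iter_le]) (simp add: degree_poly_of)
      show "(\<lambda>l. complex_of_real (XX l)) \<longlonglongrightarrow> complex_of_real x0" by (intro tendsto_of_real XL)
    qed
    moreover have "(\<lambda>l. poly ((pderiv ^^ a) (poly_of d (YY l j))) (complex_of_real (XX l))) \<longlonglongrightarrow> 0"
      using z by simp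
    ultimately show "poly ((pderiv ^^ a) (poly_of d (y j))) (complex_of_real x0) = 0"
      using LIMSEQ_unique by blast
  qed
  then show ?thesis using y unfolding Z_taut_def by blast
qed

end


context LS begin

lemma inv_seq:
  assumes XV: "\<forall>l. X l \<in> Ch k" "\<forall>l. V l \<in> Rl (L1 + k - 1)" and xv: "x \<in> Ch k" "v \<in> Rl (L1 + k - 1)"
    and lim: "(\<lambda>l. psi (X l, V l)) \<longlonglongrightarrow> psi (x, v)"
  shows "(\<lambda>l. (X l, V l)) \<longlonglongrightarrow> (x, v)"
proof -
  define YY where "YY l = Yc (X l) (V l)" for l
  define y where "y = Yc x v"
  define UU where "UU l = (\<Sum>r<k. tw (V l) r *\<^sub>R i (YY l, X l r))" for l
  define u where "u = (\<Sum>r<k. tw v r *\<^sub>R i (y, x r))"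
  have psiL: "psi (X l, V l) = (YY l, UU l)" for l by (simp add: psi_def YY_def UU_def)
  have psi0: "psi (x, v) = (y, u)" by (simp add: psi_def y_def u_def)
  have YL: "YY \<longlonglongrightarrow> y" using tendsto_fst[OF lim] unfolding psiL psi0 by simp
  have UL: "UU \<longlonglongrightarrow> u" using tendsto_snd[OF lim] unfolding psiL psi0 by simp
  have YLp: "(\<lambda>l. YY l j a) \<longlonglongrightarrow> y j a" for j a using YL unfolding tendsto_fun_iff by blast
  have y: "y \<in> Y" using Yc_in_Z(1)[of 0] k1 unfolding y_def by simp
  have XZ: "(YY l, X l r) \<in> Z" if "r < k" for l r using Yc_in_Z(2)[OF that] unfolding YY_def .
  have xZ: "\<forall>r<k. (y, x r) \<in> Z" using Yc_in_Z(2) unfolding y_def by blast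
  have "(y, u) \<in> Dset" using psi_in_D[OF xv(1), of v] psi0 by simp
  then have nin: "(y, u) \<notin> Xk (k - 1)" by (simp add: Dset_def)
  have "\<forall>a. \<exists>Bv. \<forall>l. norm (YY l 0 a) \<le> Bv"
  proof
    fix a
    have "convergent (\<lambda>l. YY l 0 a)" using YLp[of 0 a] unfolding convergent_def by blast
    then have "Bseq (\<lambda>l. YY l 0 a)" by (rule convergent_imp_Bseq)
    then show "\<exists>Bv. \<forall>l. norm (YY l 0 a) \<le> Bv" unfolding Bseq_def by blast
  qed
  then obtain Bf where Bf: "\<And>a l. norm (YY l 0 a) \<le> Bf a" by (metis choice)
  define B where "B = 1 + (\<Sum>a<d. Bf a)"
  have Xb: "\<bar>X l r\<bar> \<le> B" if r: "r < k" for l r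
  proof -
    have m0: "0 < m" using m1 by simp
    have "poly (poly_of d (YY l 0)) (complex_of_real (X l r)) = 0"
      unfolding YY_def poly_of_Yc[OF m0] using gp_root[OF r] by simp
    then have "norm (complex_of_real (X l r)) \<le> 1 + (\<Sum>a<d. norm (YY l 0 a))" by (rule root_bound)
    also have "\<dots> \<le> B" unfolding B_def using Bf by (simp add: sum_mono)
    finally show ?thesis by simp
  qed
  define Cx where "Cx = {z::nat\<Rightarrow>real. \<forall>r. z r \<in> (if r < k then {-B..B} else {0})}"
  define Ct where "Ct = {z::nat\<Rightarrow>real. \<forall>r. z r \<in> (if r < k then {0..1} else {0})}"
  have cC: "compact (Cx \<times> Ct)" unfolding Cx_def Ct_def by (intro compact_Times compact_box) auto
  have inC: "\<forall>l. (X l, tw (V l)) \<in> Cx \<times> Ct"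
  proof
    fix l
    have "X l \<in> Cx" unfolding Cx_def
    proof (intro CollectI allI)
      fix r show "X l r \<in> (if r < k then {-B..B} else {0})"
      proof (cases "r < k")
        case True then show ?thesis using Xb[OF True, of l] by (simp add: abs_le_iff)
      next
        case False then show ?thesis using XV(1) by (simp add: Ch_def)
      qed
    qed
    moreover have "tw (V l) \<in> Ct" unfolding Ct_def
    proof (intro CollectI allI)
      fix r show "tw (V l) r \<in> (if r < k then {0..1} else {0})"
      proof (cases "r < k")
        case True then show ?thesis using tw_le1[of "V l" r] tw_pos[OF True, of "V l"] by simp
      next
        case False then show ?thesis by (simp add: tw_def)
      qed
    qed
    ultimately show "(X l, tw (V l)) \<in> Cx \<times> Ct" by simp
  qed
  have A: "(\<lambda>l. (X l, tw (V l))) \<longlonglongrightarrow> (x, tw v)"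
  proof (rule subseq_limit_unique[OF cC inC])
    fix sm :: "nat \<Rightarrow> nat" and l0
    assume sm: "strict_mono sm" and L: "((\<lambda>l. (X l, tw (V l))) \<circ> sm) \<longlonglongrightarrow> l0"
    obtain xs ts where l0: "l0 = (xs, ts)" by fastforce
    have XS: "(\<lambda>l. X (sm l) r) \<longlonglongrightarrow> xs r" for r
      using tendsto_fst[OF L] unfolding l0 comp_def tendsto_fun_iff by simp
    have TS: "(\<lambda>l. tw (V (sm l)) r) \<longlonglongrightarrow> ts r" for r
      using tendsto_snd[OF L] unfolding l0 comp_def tendsto_fun_iff by simp
    have xs0: "xs r = 0" if "k \<le> r" for r
    proof -
      have "(\<lambda>l. X (sm l) r) \<longlonglongrightarrow> 0" using XV(1) that by (simp add: Ch_def)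
      then show ?thesis using XS LIMSEQ_unique by blast
    qed
    have ts0: "ts r = 0" if "k \<le> r" for r
    proof -
      have "(\<lambda>l. tw (V (sm l)) r) \<longlonglongrightarrow> 0" using that by (simp add: tw_def)
      then show ?thesis using TS LIMSEQ_unique by blast
    qed
    have ts_nn: "\<forall>r<k. ts r \<ge> 0"
    proof (intro allI impI)
      fix r assume "r < k"
      show "ts r \<ge> 0" using TS[of r] by (rule LIMSEQ_le_const) (auto intro: less_imp_le tw_pos \<open>r < k\<close>)
    qed
    have ts_sum: "(\<Sum>r<k. ts r) = 1"
    proof -
      have "(\<lambda>l. \<Sum>r<k. tw (V (sm l)) r) \<longlonglongrightarrow> (\<Sum>r<k. ts r)" by (intro tendsto_sum TS)
      moreover have "(\<lambda>l. \<Sum>r<k. tw (V (sm l)) r) \<longlonglongrightarrow> 1" by (simp add: tw_sum)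
      ultimately show ?thesis using LIMSEQ_unique by blast
    qed
    have YS: "(\<lambda>l. YY (sm l)) \<longlonglongrightarrow> y" using LIMSEQ_subseq_LIMSEQ[OF YL sm] by (simp add: comp_def)
    have YSp: "(\<lambda>l. YY (sm l) j a) \<longlonglongrightarrow> y j a" for j a using YS unfolding tendsto_fun_iff by blast
    have xsZ: "\<forall>r<k. (y, xs r) \<in> Z"
    proof (intro allI impI)
      fix r assume r: "r < k"
      show "(y, xs r) \<in> Z" by (rule Z_limit[OF y YSp XS]) (use XZ[OF r] in auto)
    qed
    have uS: "u = (\<Sum>r<k. ts r *\<^sub>R i (y, xs r))"
    proof -
      have "(\<lambda>l. UU (sm l)) \<longlonglongrightarrow> (\<Sum>r<k. ts r *\<^sub>R i (y, xs r))"
        unfolding UU_def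
      proof (intro tendsto_sum tendsto_scaleR TS)
        fix r assume "r \<in> {..<k}"
        then have r: "r < k" by simp
        show "(\<lambda>l. i (YY (sm l), X (sm l) r)) \<longlonglongrightarrow> i (y, xs r)"
          by (rule i_tendsto) (use XZ[OF r] xsZ r tendsto_Pair[OF YS XS] in auto)
      qed
      moreover have "(\<lambda>l. UU (sm l)) \<longlonglongrightarrow> u" using LIMSEQ_subseq_LIMSEQ[OF UL sm] by (simp add: comp_def)
      ultimately show ?thesis using LIMSEQ_unique by blast
    qed
    have mono: "xs a \<le> xs b" if "a < b" "b < k" for a b
    proof (rule LIMSEQ_le[OF XS XS])
      have "X (sm l) a < X (sm l) b" for l using XV(1) that unfolding Ch_def by blast
      then show "\<exists>N. \<forall>l\<ge>N. X (sm l) a \<le> X (sm l) b" by (auto intro: less_imp_le)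
    qed
    have inj: "inj_on xs {..<k}"
    proof (rule ccontr)
      assume ni: "\<not> inj_on xs {..<k}"
      define P where "P = (\<lambda>r. i (y, xs r)) ` {..<k}"
      have "card (xs ` {..<k}) \<noteq> k" using ni inj_on_iff_eq_card[of "{..<k}" xs] by simp
      then have "card (xs ` {..<k}) < k" using card_image_le[of "{..<k}" xs] by simp
      moreover have "P = (\<lambda>s. i (y, s)) ` (xs ` {..<k})" unfolding P_def by auto
      then have "card P \<le> card (xs ` {..<k})" by (simp add: card_image_le)
      ultimately have cP: "card P \<le> k - 1" by simp
      have "u \<in> convex hull P" unfolding uS P_def
        by (rule convex_sum) (use ts_nn ts_sum in \<open>auto intro: hull_inc\<close>)
      moreover have "P \<subseteq> i ` {z \<in> Z. fst z = y}" unfolding P_def using xsZ by auto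
      ultimately have "(y, u) \<in> Xk (k - 1)" unfolding Xk_iff using y cP
        by (intro conjI exI[of _ P]) (auto simp: P_def)
      then show False using nin by simp
    qed
    have xsCh: "xs \<in> Ch k" unfolding Ch_def
    proof (intro CollectI conjI allI impI)
      fix a b assume ab: "a < b" "b < k"
      then have "xs a \<noteq> xs b" using inj unfolding inj_on_def by force
      then show "xs a < xs b" using mono[OF ab] by simp
    next
      fix r assume "k \<le> r" then show "xs r = 0" by (rule xs0)
    qed
    have eq: "(\<Sum>r<k. tw v r *\<^sub>R i (y, x r)) = (\<Sum>r<k. ts r *\<^sub>R i (y, xs r))"
      using uS unfolding u_def .
    note ru = rep_unique[OF y xv(1) xsCh xZ xsZ _ tw_sum ts_nn ts_sum eq]
    have xx: "x = xs" using ru(1) tw_pos by blast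
    have tt: "tw v = ts"
    proof
      fix r show "tw v r = ts r"
      proof (cases "r < k")
        case True then show ?thesis using ru(2) tw_pos by blast
      next
        case False then show ?thesis using ts0 by (simp add: tw_def)
      qed
    qed
    show "l0 = (x, tw v)" using l0 xx tt by simp
  qed
  have XL: "(\<lambda>l. X l r) \<longlonglongrightarrow> x r" for r using tendsto_fst[OF A] unfolding tendsto_fun_iff by simp
  have TL: "(\<lambda>l. tw (V l) r) \<longlonglongrightarrow> tw v r" for r using tendsto_snd[OF A] unfolding tendsto_fun_iff by simp
  have HL: "cconv (\<lambda>l. hp (V l) j) (hp v j)" if j: "j < m" for j
  proof (rule cconv_shift_quotient[where G = "\<lambda>l. gp (X l)" and g = "gp x" and N = "n * k" and e = e])
    show "cconv (\<lambda>l. gp (X l)) (gp x)" by (rule cconv_gp[OF XL])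
    show "degree (gp (X l)) = n * k" "coeff (gp (X l)) (n * k) = 1" for l by (rule gp_monic)+
    show "coeff (hp (V l) j) a = coeff (hp v j) a" if "e \<le> a" for l a
      using that by (simp add: hp_def coeff_poly_of)
    have "cconv (\<lambda>l. poly_of d (YY l j)) (poly_of d (y j))" by (intro cconv_poly_of YLp)
    then show "cconv (\<lambda>l. gp (X l) * hp (V l) j) (gp x * hp v j)"
      using poly_of_Yc[OF j] unfolding YY_def y_def by simp
  qed
  have VL: "(\<lambda>l. V l idx) \<longlonglongrightarrow> v idx" for idx
  proof -
    have Vl: "V l idx = enc (hp (V l)) (tw (V l)) idx" for l using enc_dec XV(2) by simp
    have v0: "v idx = enc (hp v) (tw v) idx" using enc_dec xv(2) by simp
    show ?thesis
    proof (cases "idx < L1")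
      case True
      note D = idx_decomp[OF True]
      have c: "(\<lambda>l. coeff (hp (V l) (idx div dK div e)) (idx div dK mod e)) \<longlonglongrightarrow> coeff (hp v (idx div dK div e)) (idx div dK mod e)"
        using HL[OF D(1)] by (simp add: cconv_def)
      show ?thesis unfolding Vl v0 enc_def using True c
        by (auto intro: tendsto_Re tendsto_Im)
    next
      case False
      show ?thesis
      proof (cases "idx < L1 + k - 1")
        case True
        have r: "idx - L1 < k" "k - 1 < k" using True False k1 by auto
        have "(\<lambda>l. ln (tw (V l) (idx - L1) / tw (V l) (k - 1))) \<longlonglongrightarrow> ln (tw v (idx - L1) / tw v (k - 1))"
        proof -
          have p1: "tw v (idx - L1) > 0" by (rule tw_pos[OF r(1)])
          have p2: "tw v (k - 1) > 0" by (rule tw_pos[OF r(2)])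
          have "(\<lambda>l. tw (V l) (idx - L1) / tw (V l) (k - 1)) \<longlonglongrightarrow> tw v (idx - L1) / tw v (k - 1)"
            using p2 by (intro tendsto_divide TL) simp
          then show ?thesis using p1 p2 by (intro tendsto_ln) simp_all
        qed
        then show ?thesis unfolding Vl v0 enc_def using True False by simp
      next
        case F2: False
        then show ?thesis unfolding Vl v0 enc_def using False by simp
      qed
    qed
  qed
  have "(\<lambda>l. X l) \<longlonglongrightarrow> x" using XL unfolding tendsto_fun_iff by blast
  moreover have "(\<lambda>l. V l) \<longlonglongrightarrow> v" using VL unfolding tendsto_fun_iff by blast
  ultimately show ?thesis by (rule tendsto_Pair)
qed

end


lemma bundle_from_homeo:
  fixes D :: "'a::topological_space set"
  assumes "subtopology euclidean D homeomorphic_space prod_topology B (subtopology euclidean (Rl l))"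
  shows "\<exists>(E :: 'a topology) p. real_affine_bundle E B p l \<and> subtopology euclidean D homeomorphic_space E"
proof -
  define E where "E = subtopology euclidean D"
  obtain h where h: "homeomorphic_map E (prod_topology B (subtopology euclidean (Rl l))) h"
    using assms unfolding E_def homeomorphic_space by blast
  define p where "p = fst \<circ> h"
  have hc: "continuous_map E (prod_topology B (subtopology euclidean (Rl l))) h"
    using h homeomorphic_imp_continuous_map by blast
  have hs: "h ` topspace E = topspace B \<times> Rl l"
    using h homeomorphic_imp_surjective_map by fastforce
  have pc: "continuous_map E B p" unfolding p_def using hc continuous_map_fst continuous_map_compose by blast
  have R0: "(\<lambda>_. 0) \<in> Rl l" by (simp add: Rl_def)
  have ps: "p ` topspace E = topspace B"
  proof -
    have "p ` topspace E = fst ` (h ` topspace E)" unfolding p_def by (simp add: image_comp)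
    also have "\<dots> = topspace B" using hs R0 by (auto simp: fst_image_times)
    finally show ?thesis .
  qed
  have sub: "{e \<in> topspace E. p e \<in> topspace B} = topspace E" using ps by blast
  have lt: "local_triv E B p l (topspace B) h"
    unfolding local_triv_def using h sub by (simp add: p_def)
  have "real_affine_bundle E B p l"
    unfolding real_affine_bundle_def
  proof (intro conjI pc ps exI[of _ "{(topspace B, h)}"])
    show "\<forall>(U, \<phi>)\<in>{(topspace B, h)}. local_triv E B p l U \<phi>" using lt by simp
    show "\<forall>b\<in>topspace B. \<exists>(U, \<phi>)\<in>{(topspace B, h)}. b \<in> U" by simp
    have "affine_bij_Rl l id" by (simp add: affine_bij_Rl_def)
    then show "\<forall>(U, \<phi>)\<in>{(topspace B, h)}. \<forall>(V, \<psi>)\<in>{(topspace B, h)}. \<forall>b\<in>U \<inter> V.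
        \<exists>g. affine_bij_Rl l g \<and> (\<forall>e\<in>topspace E. p e = b \<longrightarrow> snd (\<psi> e) = g (snd (\<phi> e)))"
      by auto
  qed
  then show ?thesis unfolding E_def using homeomorphic_space_refl by blast
qed

lemma Conf_homeo: "Conf_top k homeomorphic_space subtopology euclidean (Ch k)"
proof -
  have sg: "(\<lambda>S i. if i < k then sorted_list_of_set S ! i else 0) = sig k" by (simp add: sig_def fun_eq_iff)
  have top: "topspace (Conf_top k) = Conf k"
    unfolding Conf_top_def by (simp add: topspace_pullback_topology)
  have c1: "continuous_map (Conf_top k) (subtopology euclidean (Ch k)) (sig k)"
  proof (rule continuous_map_into_subtopology)
    have "continuous_map (pullback_topology (Conf k) (sig k) euclidean) euclidean (id \<circ> sig k)"
      by (rule continuous_map_pullback) simp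
    then show "continuous_map (Conf_top k) euclidean (sig k)" unfolding Conf_top_def sg by simp
    show "sig k \<in> topspace (Conf_top k) \<rightarrow> Ch k" using top sig_Ch by auto
  qed
  have c2: "continuous_map (subtopology euclidean (Ch k)) (Conf_top k) (\<lambda>x. x ` {..<k})"
    unfolding Conf_top_def sg
  proof (rule continuous_map_pullback')
    have "continuous_map (subtopology euclidean (Ch k)) euclidean id" by simp
    then show "continuous_map (subtopology euclidean (Ch k)) euclidean (sig k \<circ> (\<lambda>x. x ` {..<k}))"
      by (rule continuous_map_eq) (simp add: Ch_sig)
    show "topspace (subtopology euclidean (Ch k)) \<subseteq> (\<lambda>x. x ` {..<k}) -` Conf k"
      using Ch_Conf by auto
  qed
  have "homeomorphic_maps (Conf_top k) (subtopology euclidean (Ch k)) (sig k) (\<lambda>x. x ` {..<k})"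
    unfolding homeomorphic_maps_def using c1 c2 top sig_Ch Ch_sig by auto
  then show ?thesis unfolding homeomorphic_space_def by blast
qed

context LS begin

lemma psi_bij: "bij_betw psi M Dset"
proof (rule bij_betw_imageI)
  show "inj_on psi M"
    unfolding inj_on_def M_def using psi_inj by fastforce
  show "psi ` M = Dset"
  proof
    show "psi ` M \<subseteq> Dset" unfolding M_def using psi_in_D by auto
    show "Dset \<subseteq> psi ` M"
    proof
      fix q assume "q \<in> Dset"
      then obtain y u where q: "q = (y, u)" "(y, u) \<in> Dset" by (cases q) auto
      then obtain x v where "x \<in> Ch k" "v \<in> Rl (L1 + k - 1)" "psi (x, v) = (y, u)" using onto by blast
      then show "q \<in> psi ` M" unfolding M_def using q by force
    qed
  qed
qed

lemma D_homeo: "subtopology euclidean Dset homeomorphic_space subtopology euclidean M"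
proof -
  define phi where "phi = inv_into M psi"
  have b: "bij_betw psi M Dset" by (rule psi_bij)
  have l1: "phi (psi a) = a" if "a \<in> M" for a using b that unfolding phi_def by (simp add: bij_betw_inv_into_left)
  have l2: "psi (phi q) = q" if "q \<in> Dset" for q using b that unfolding phi_def by (simp add: bij_betw_inv_into_right)
  have l3: "phi q \<in> M" if "q \<in> Dset" for q using b that unfolding phi_def
    by (metis bij_betw_def inv_into_into)
  have cphi: "continuous_on Dset phi"
  proof (rule continuous_on_sequentiallyI)
    fix s q0 assume sD: "\<forall>l. s l \<in> Dset" and q0: "q0 \<in> Dset" and lim: "s \<longlonglongrightarrow> q0"
    define X where "X l = fst (phi (s l))" for l
    define V where "V l = snd (phi (s l))" for l
    obtain x v where xv: "phi q0 = (x, v)" by fastforce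
    have XV: "\<forall>l. X l \<in> Ch k" "\<forall>l. V l \<in> Rl (L1 + k - 1)"
      using l3 sD unfolding X_def V_def M_def by (auto simp: mem_Times_iff)
    have xvM: "x \<in> Ch k" "v \<in> Rl (L1 + k - 1)" using l3[OF q0] xv unfolding M_def by auto
    have "psi (X l, V l) = s l" for l using l2 sD unfolding X_def V_def by simp
    moreover have "psi (x, v) = q0" using l2[OF q0] xv by simp
    ultimately have "(\<lambda>l. psi (X l, V l)) \<longlonglongrightarrow> psi (x, v)" using lim by simp
    then have "(\<lambda>l. (X l, V l)) \<longlonglongrightarrow> (x, v)" by (rule inv_seq[OF XV xvM])
    then show "(\<lambda>l. phi (s l)) \<longlonglongrightarrow> phi q0" unfolding X_def V_def xv by simp
  qed
  have f1: "phi \<in> Dset \<rightarrow> M" using l3 by blast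
  have f2: "psi \<in> M \<rightarrow> Dset" using b unfolding bij_betw_def by blast
  have "homeomorphic_maps (subtopology euclidean Dset) (subtopology euclidean M) phi psi"
    unfolding homeomorphic_maps_def continuous_map_subtopology_eu topspace_subtopology topspace_euclidean
    using cphi psi_cont f1 f2 l1 l2 by simp
  then show ?thesis unfolding homeomorphic_space_def by blast
qed

lemma main:
  "\<exists>(E :: ((nat \<Rightarrow> nat \<Rightarrow> complex) \<times> (real ^ 'N)) topology) p.
     real_affine_bundle E (Conf_top k) p (L1 + k - 1) \<and> subtopology euclidean Dset homeomorphic_space E"
proof (rule bundle_from_homeo)
  have "subtopology euclidean M = prod_topology (subtopology euclidean (Ch k)) (subtopology euclidean (Rl (L1 + k - 1)))"
    by (simp add: M_def)
  also have "\<dots> homeomorphic_space prod_topology (Conf_top k) (subtopology euclidean (Rl (L1 + k - 1)))"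
  proof (rule homeomorphic_space_prod_topology)
    show "subtopology euclidean (Ch k) homeomorphic_space Conf_top k"
      using Conf_homeo homeomorphic_space_sym by blast
  qed simp
  finally have "subtopology euclidean M homeomorphic_space prod_topology (Conf_top k) (subtopology euclidean (Rl (L1 + k - 1)))" .
  then show "subtopology euclidean Dset homeomorphic_space prod_topology (Conf_top k) (subtopology euclidean (Rl (L1 + k - 1)))"
    using D_homeo homeomorphic_space_trans by blast
qed

end

theorem lemma3p2:
  fixes K :: "complex set" and d m n k :: nat
    and i :: "(nat \<Rightarrow> nat \<Rightarrow> complex) \<times> real \<Rightarrow> real ^ 'N"
  assumes "K = \<real> \<or> K = UNIV"
    and "d \<ge> 1" "m \<ge> 1" "n \<ge> 1" "(m, n) \<noteq> (1, 1)"
    and "nondegenerate_resolution (subtopology euclidean (Z_taut K d m n))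
           (Sigma_disc K d m n) fst i"
    and "1 \<le> k" "k \<le> d div n"
  shows "\<exists>(E :: ((nat \<Rightarrow> nat \<Rightarrow> complex) \<times> (real ^ 'N)) topology) p.
           real_affine_bundle E (Conf_top k) p (dimK K * m * (d - n * k) + k - 1) \<and>
           subtopology euclidean
             (resolution_filt (subtopology euclidean (Z_taut K d m n)) (Sigma_disc K d m n) fst i k
              - resolution_filt (subtopology euclidean (Z_taut K d m n)) (Sigma_disc K d m n) fst i (k - 1))
           homeomorphic_space E"
proof -
  interpret LS K d m n k i using assms by unfold_locales auto
  show ?thesis using main unfolding Dset_def Xk_def L1_def dK_def e_def .
qed


end
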